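(* Let $\beta_1,\beta_2,\gamma_1,\gamma_2>0$ and $0<\sigma_{21}\le\sigma_{12}\le1$ be fixed, and for $\mu>0$ set $\mathcal R_i=\beta_i/(\gamma_i+\mu)$. Then there exists $\mu^*\in(0,\min\{\gamma_1,\gamma_2\})$ such that for all $0<\mu<\mu^*$: (i) If $(\mathcal R_1,\mathcal R_2)\in\Omega^\mu$, then system (M) has a unique feasible steady state with $I_1^*>0$ and $I_2^*>0$, and it satisfies $S^*=s_0+\mathcal O(\mu)$ and $I_i^*=\mu b_i+\mathcal O(\mu^2)$ for $i=1,2$ as $\mu\to0^+$, where $s_0$ is the positive root of $p_s(s)=as^2+bs+c$ and $$b_1=\frac{s_0+\sigma_{12}(1-s_0)}{\gamma_1\sigma_{12}}(1-\mathcal R_2s_0),\qquad b_2=\frac{s_0+\sigma_{21}(1-s_0)}{\gamma_2\sigma_{21}}(1-\mathcal R_1s_0).$$ (ii) If $(\mathcal R_1,\mathcal R_2)\notin\Omega^\mu$, then system (M) has no steady state with $I_1^*>0$ and $I_2^*>0$ that is feasible.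
   Context: System (M) is the two-strain epidemic model for $(S,I_1,I_2,J_1,J_2,R_1,R_2,R_3)$ (the letters $R_1,R_2,R_3$ denote compartments, while $\mathcal R_1,\mathcal R_2$ denote numbers): $S'=\mu-\beta_1(I_1+J_1)S-\beta_2(I_2+J_2)S-\mu S$, $I_1'=\beta_1S(I_1+J_1)-(\mu+\gamma_1)I_1$, $I_2'=\beta_2S(I_2+J_2)-(\mu+\gamma_2)I_2$, $J_1'=\beta_1\sigma_{21}R_2(I_1+J_1)-(\mu+\gamma_1)J_1$, $J_2'=\beta_2\sigma_{12}R_1(I_2+J_2)-(\mu+\gamma_2)J_2$, $R_1'=\gamma_1I_1-\beta_2\sigma_{12}(I_2+J_2)R_1-\mu R_1$, $R_2'=\gamma_2I_2-\beta_1\sigma_{21}(I_1+J_1)R_2-\mu R_2$, $R_3'=\gamma_1J_1+\gamma_2J_2-\mu R_3$. A steady state is a zero of the right-hand side; it is feasible if all components are nonnegative and sum to 1. For $\mu\ge 0$, $\Omega^\mu=\Omega^\mu_1\cap\Omega^\mu_2$ where, for $\{i,j\}=\{1,2\}$, $\Omega^\mu_i=\left\{(\mathcal R_1,\mathcal R_2):\ \mathcal R_i>1,\ \mathcal R_j>\dfrac{(\gamma_i+\mu)\mathcal R_i}{(1+\sigma_{ij}(\mathcal R_i-1))\gamma_i+\mu}\right\}$. The quadratic $p_s(s)=as^2+bs+c$ has coefficients $a=\sigma_{12}(1-\sigma_{21})\mathcal R_1+\sigma_{21}(1-\sigma_{12})\mathcal R_2$, $b=\sigma_{12}\sigma_{21}(\mathcal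 R_1+\mathcal R_2)-(\sigma_{12}+\sigma_{21}-\sigma_{12}\sigma_{21})$, $c=-\sigma_{12}\sigma_{21}$; when $a>0$ it has exactly one positive root since $c<0$ (when $a=0$, i.e. $\sigma_{12}=\sigma_{21}=1$, $s_0=1/(\mathcal R_1+\mathcal R_2-1)$). *)

theory Defs
  imports Complex_Main
begin

text \<open>State vector (S, I1, I2, J1, J2, R1, R2, R3).\<close>
type_synonym state = "real \<times> real \<times> real \<times> real \<times> real \<times> real \<times> real \<times> real"

definition steady_state ::
  "real \<Rightarrow> real \<Rightarrow> real \<Rightarrow> real \<Rightarrow> real \<Rightarrow> real \<Rightarrow> real \<Rightarrow> state \<Rightarrow> bool" where
  "steady_state \<beta>1 \<beta>2 \<gamma>1 \<gamma>2 \<sigma>12 \<sigma>21 \<mu> x \<longleftrightarrow>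
     (case x of (S, I1, I2, J1, J2, R1, R2, R3) \<Rightarrow>
        \<mu> - \<beta>1 * (I1 + J1) * S - \<beta>2 * (I2 + J2) * S - \<mu> * S = 0 \<and>
        \<beta>1 * S * (I1 + J1) - (\<mu> + \<gamma>1) * I1 = 0 \<and>
        \<beta>2 * S * (I2 + J2) - (\<mu> + \<gamma>2) * I2 = 0 \<and>
        \<beta>1 * \<sigma>21 * R2 * (I1 + J1) - (\<mu> + \<gamma>1) * J1 = 0 \<and>
        \<beta>2 * \<sigma>12 * R1 * (I2 + J2) - (\<mu> + \<gamma>2) * J2 = 0 \<and>
        \<gamma>1 * I1 - \<beta>2 * \<sigma>12 * (I2 + J2) * R1 - \<mu> * R1 = 0 \<and>
        \<gamma>2 * I2 - \<beta>1 * \<sigma>21 * (I1 + J1) * R2 - \<mu> * R2 = 0 \<and>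
        \<gamma>1 * J1 + \<gamma>2 * J2 - \<mu> * R3 = 0)"

definition feasible :: "state \<Rightarrow> bool" where
  "feasible x \<longleftrightarrow>
     (case x of (S, I1, I2, J1, J2, R1, R2, R3) \<Rightarrow>
        S \<ge> 0 \<and> I1 \<ge> 0 \<and> I2 \<ge> 0 \<and> J1 \<ge> 0 \<and> J2 \<ge> 0 \<and> R1 \<ge> 0 \<and> R2 \<ge> 0 \<and> R3 \<ge> 0 \<and>
        S + I1 + I2 + J1 + J2 + R1 + R2 + R3 = 1)"

definition I1_of :: "state \<Rightarrow> real" where
  "I1_of x = (case x of (S, I1, I2, J1, J2, R1, R2, R3) \<Rightarrow> I1)"
definition I2_of :: "state \<Rightarrow> real" where
  "I2_of x = (case x of (S, I1, I2, J1, J2, R1, R2, R3) \<Rightarrow> I2)"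
definition S_of :: "state \<Rightarrow> real" where
  "S_of x = (case x of (S, I1, I2, J1, J2, R1, R2, R3) \<Rightarrow> S)"

definition repr_num :: "real \<Rightarrow> real \<Rightarrow> real \<Rightarrow> real" where
  "repr_num \<beta> \<gamma> \<mu> = \<beta> / (\<gamma> + \<mu>)"

definition Omega_i :: "real \<Rightarrow> real \<Rightarrow> real \<Rightarrow> real \<Rightarrow> real \<Rightarrow> bool" where
  "Omega_i \<mu> \<gamma>i \<sigma>ij Ri Rj \<longleftrightarrow>
     Ri > 1 \<and> Rj > (\<gamma>i + \<mu>) * Ri / ((1 + \<sigma>ij * (Ri - 1)) * \<gamma>i + \<mu>)"

definition Omega :: "real \<Rightarrow> real \<Rightarrow> real \<Rightarrow> real \<Rightarrow> real \<Rightarrow> real \<Rightarrow> real \<Rightarrow> bool" where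
  "Omega \<mu> \<gamma>1 \<gamma>2 \<sigma>12 \<sigma>21 R1 R2 \<longleftrightarrow>
     Omega_i \<mu> \<gamma>1 \<sigma>12 R1 R2 \<and> Omega_i \<mu> \<gamma>2 \<sigma>21 R2 R1"

definition ps_a :: "real \<Rightarrow> real \<Rightarrow> real \<Rightarrow> real \<Rightarrow> real" where
  "ps_a \<sigma>12 \<sigma>21 R1 R2 = \<sigma>12 * (1 - \<sigma>21) * R1 + \<sigma>21 * (1 - \<sigma>12) * R2"
definition ps_b :: "real \<Rightarrow> real \<Rightarrow> real \<Rightarrow> real \<Rightarrow> real" where
  "ps_b \<sigma>12 \<sigma>21 R1 R2 = \<sigma>12 * \<sigma>21 * (R1 + R2) - (\<sigma>12 + \<sigma>21 - \<sigma>12 * \<sigma>21)"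
definition ps_c :: "real \<Rightarrow> real \<Rightarrow> real" where
  "ps_c \<sigma>12 \<sigma>21 = - \<sigma>12 * \<sigma>21"

definition s0 :: "real \<Rightarrow> real \<Rightarrow> real \<Rightarrow> real \<Rightarrow> real" where
  "s0 \<sigma>12 \<sigma>21 R1 R2 = (THE s. s > 0 \<and>
     ps_a \<sigma>12 \<sigma>21 R1 R2 * s\<^sup>2 + ps_b \<sigma>12 \<sigma>21 R1 R2 * s + ps_c \<sigma>12 \<sigma>21 = 0)"

end

theory Submission
  imports Defs
begin


locale epi =
  fixes b1 b2 c1 c2 p q :: real
  assumes b1: "b1 > 0" and b2: "b2 > 0" and c1: "c1 > 0" and c2: "c2 > 0"
    and q0: "0 < q" and qp: "q \<le> p" and p1: "p \<le> 1"
begin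

lemma p0: "p > 0" using q0 qp by linarith
lemma q1: "q \<le> 1" using qp p1 by linarith

definition A :: "real \<Rightarrow> real" where "A m = (c1 + m) / b1"
definition B :: "real \<Rightarrow> real" where "B m = (c2 + m) / b2"
definition Xa :: "real \<Rightarrow> real \<Rightarrow> real" where
  "Xa m S = (B m - S) * (c2 * S / p + (c2 + m) * (A m - S) / q)"
definition Xb :: "real \<Rightarrow> real \<Rightarrow> real" where
  "Xb m S = (A m - S) * (c1 * S / q + (c1 + m) * (B m - S) / p)"
definition Q :: "real \<Rightarrow> real \<Rightarrow> real" where
  "Q m S = (c1 + m) * Xa m S + (c2 + m) * Xb m S"
definition Dl :: "real \<Rightarrow> real \<Rightarrow> real" where
  "Dl m S = c1 * c2 * S^2 - (c1 + m) * (c2 + m) * (A m - S) * (B m - S)"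
definition F :: "real \<Rightarrow> real \<Rightarrow> real" where
  "F m S = (1 - S) * Dl m S - S * Q m S"

lemma A_pos: "m \<ge> 0 \<Longrightarrow> A m > 0" using b1 c1 by (simp add: A_def)
lemma B_pos: "m \<ge> 0 \<Longrightarrow> B m > 0" using b2 c2 by (simp add: B_def)

definition st :: "real \<Rightarrow> real \<Rightarrow> state" where
  "st m S = (let I1 = m * (1 - S) * Xa m S / Q m S; I2 = m * (1 - S) * Xb m S / Q m S;
     J1 = I1 * (A m - S) / S; J2 = I2 * (B m - S) / S
   in (S, I1, I2, J1, J2, (B m - S) / p, (A m - S) / q, (c1 * J1 + c2 * J2) / m))"

lemma reduce:
  assumes m: "m > 0"
    and ss: "steady_state b1 b2 c1 c2 p q m (S, I1, I2, J1, J2, R1, R2, R3)"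
    and fe: "feasible (S, I1, I2, J1, J2, R1, R2, R3)"
    and i1: "I1 > 0" and i2: "I2 > 0"
  shows "0 < S \<and> S < A m \<and> S < B m \<and> S < 1 \<and> F m S = 0 \<and>
         (S, I1, I2, J1, J2, R1, R2, R3) = st m S"
proof -
  note p0 q0 c1 c2 b1 b2
  from ss have e1: "m - b1 * (I1 + J1) * S - b2 * (I2 + J2) * S - m * S = 0"
    and e2: "b1 * S * (I1 + J1) - (m + c1) * I1 = 0"
    and e3: "b2 * S * (I2 + J2) - (m + c2) * I2 = 0"
    and e4: "b1 * q * R2 * (I1 + J1) - (m + c1) * J1 = 0"
    and e5: "b2 * p * R1 * (I2 + J2) - (m + c2) * J2 = 0"
    and e6: "c1 * I1 - b2 * p * (I2 + J2) * R1 - m * R1 = 0"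
    and e7: "c2 * I2 - b1 * q * (I1 + J1) * R2 - m * R2 = 0"
    and e8: "c1 * J1 + c2 * J2 - m * R3 = 0"
    unfolding steady_state_def by auto
  from fe have nn: "S \<ge> 0" "J1 \<ge> 0" "J2 \<ge> 0" "R1 \<ge> 0" "R2 \<ge> 0" "R3 \<ge> 0"
    unfolding feasible_def by auto
  define L1 where "L1 = I1 + J1"
  define L2 where "L2 = I2 + J2"
  have L1: "L1 > 0" "L2 > 0" using i1 i2 nn by (auto simp: L1_def L2_def)
  have "b1 * S * L1 > 0" using e2 i1 m c1 by (simp add: L1_def)
  hence "S \<noteq> 0" by auto
  hence S0: "S > 0" using nn by simp
  have "b1 * L1 * (S + q * R2) = (c1 + m) * L1" using e2 e4 unfolding L1_def by (simp add: algebra_simps)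
  hence "b1 * (S + q * R2) = c1 + m" using L1(1) by simp
  hence R2e: "R2 = (A m - S) / q" using b1 q0 unfolding A_def by (simp add: field_simps)
  have "b2 * L2 * (S + p * R1) = (c2 + m) * L2" using e3 e5 unfolding L2_def by (simp add: algebra_simps)
  hence "b2 * (S + p * R1) = c2 + m" using L1(2) by simp
  hence R1e: "R1 = (B m - S) / p" using b2 p0 unfolding B_def by (simp add: field_simps)
  define u where "u = A m - S"
  define v where "v = B m - S"
  have lam1: "b1 * L1 * S = (c1 + m) * I1" using e2 by (simp add: L1_def algebra_simps)
  have lam2: "b2 * L2 * S = (c2 + m) * I2" using e3 by (simp add: L2_def algebra_simps)
  have J1e: "J1 = I1 * u / S"
  proof -
    have "(c1 + m) * J1 = b1 * L1 * (q * R2)" using e4 by (simp add: L1_def algebra_simps)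
    hence "(c1 + m) * J1 * S = b1 * L1 * S * (q * R2)" by (simp add: algebra_simps)
    also have "\<dots> = (c1 + m) * I1 * u" using lam1 R2e q0 by (simp add: u_def)
    finally have "(c1 + m) * (J1 * S) = (c1 + m) * (I1 * u)" by (simp add: algebra_simps)
    hence "J1 * S = I1 * u" using c1 m by (simp del: mult_cancel_left add: mult_cancel_left)
    thus ?thesis using S0 by (simp add: field_simps)
  qed
  have J2e: "J2 = I2 * v / S"
  proof -
    have "(c2 + m) * J2 = b2 * L2 * (p * R1)" using e5 by (simp add: L2_def algebra_simps)
    hence "(c2 + m) * J2 * S = b2 * L2 * S * (p * R1)" by (simp add: algebra_simps)
    also have "\<dots> = (c2 + m) * I2 * v" using lam2 R1e p0 by (simp add: v_def)
    finally have "(c2 + m) * (J2 * S) = (c2 + m) * (I2 * v)" by (simp add: algebra_simps)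
    hence "J2 * S = I2 * v" using c2 m by (simp del: mult_cancel_left add: mult_cancel_left)
    thus ?thesis using S0 by (simp add: field_simps)
  qed
  have pR1: "p * R1 = v" using R1e p0 by (simp add: v_def)
  have qR2: "q * R2 = u" using R2e q0 by (simp add: u_def)
  have E1: "c1 * S * I1 = (c2 + m) * v * I2 + m * v * S / p"
  proof -
    have "c1 * I1 = b2 * L2 * p * R1 + m * R1" using e6 by (simp add: L2_def algebra_simps)
    hence "S * (c1 * I1) = S * (b2 * L2 * p * R1 + m * R1)" by simp
    hence "c1 * S * I1 = (b2 * L2 * S) * (p * R1) + m * S * R1" by (simp add: algebra_simps)
    also have "\<dots> = (c2 + m) * I2 * v + m * S * (v / p)" using lam2 pR1 R1e by (simp add: v_def)
    finally show ?thesis by (simp add: algebra_simps)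
  qed
  have E2: "c2 * S * I2 = (c1 + m) * u * I1 + m * u * S / q"
  proof -
    have "c2 * I2 = b1 * L1 * q * R2 + m * R2" using e7 by (simp add: L1_def algebra_simps)
    hence "S * (c2 * I2) = S * (b1 * L1 * q * R2 + m * R2)" by simp
    hence "c2 * S * I2 = (b1 * L1 * S) * (q * R2) + m * S * R2" by (simp add: algebra_simps)
    also have "\<dots> = (c1 + m) * I1 * u + m * S * (u / q)" using lam1 qR2 R2e by (simp add: u_def)
    finally show ?thesis by (simp add: algebra_simps)
  qed
  have E3: "m * (1 - S) = (c1 + m) * I1 + (c2 + m) * I2"
    using e1 lam1 lam2 by (simp add: L1_def L2_def algebra_simps)
  have v0: "v > 0"
  proof (rule ccontr)
    assume "\<not> v > 0"
    hence "v * ((c2 + m) * I2 + m * S / p) \<le> 0" using c2 m i2 S0 p0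
      by (intro mult_nonpos_nonneg) auto
    hence "(c2 + m) * v * I2 + m * v * S / p \<le> 0" by (simp add: algebra_simps)
    moreover have "c1 * S * I1 > 0" using c1 S0 i1 by simp
    ultimately show False using E1 by linarith
  qed
  have u0: "u > 0"
  proof (rule ccontr)
    assume "\<not> u > 0"
    hence "u * ((c1 + m) * I1 + m * S / q) \<le> 0" using c1 m i1 S0 q0
      by (intro mult_nonpos_nonneg) auto
    hence "(c1 + m) * u * I1 + m * u * S / q \<le> 0" by (simp add: algebra_simps)
    moreover have "c2 * S * I2 > 0" using c2 S0 i2 by simp
    ultimately show False using E2 by linarith
  qed
  have S1: "S < 1"
  proof -
    have "(c1 + m) * I1 > 0" using c1 m i1 by simp
    moreover have "(c2 + m) * I2 > 0" using c2 m i2 by simp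
    ultimately have "m * (1 - S) > 0" using E3 by linarith
    thus ?thesis using m by (simp add: zero_less_mult_iff)
  qed
  define D where "D = c1 * c2 * S^2 - (c1 + m) * (c2 + m) * u * v"
  have DI1: "D * I1 = m * S * Xa m S"
  proof -
    have "D * I1 = c2 * S * (c1 * S * I1) - (c2 + m) * v * ((c1 + m) * u * I1)"
      by (simp add: D_def power2_eq_square algebra_simps)
    also have "\<dots> = c2 * S * ((c2 + m) * v * I2 + m * v * S / p) - (c2 + m) * v * (c2 * S * I2 - m * u * S / q)"
      using E1 E2 by simp
    also have "\<dots> = m * S * Xa m S" using p0 q0 by (simp add: Xa_def u_def v_def field_simps; algebra?)
    finally show ?thesis .
  qed
  have DI2: "D * I2 = m * S * Xb m S"
  proof -
    have "D * I2 = c1 * S * (c2 * S * I2) - (c1 + m) * u * ((c2 + m) * v * I2)"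
      by (simp add: D_def power2_eq_square algebra_simps)
    also have "\<dots> = c1 * S * ((c1 + m) * u * I1 + m * u * S / q) - (c1 + m) * u * (c1 * S * I1 - m * v * S / p)"
      using E1 E2 by simp
    also have "\<dots> = m * S * Xb m S" using p0 q0 by (simp add: Xb_def u_def v_def field_simps; algebra?)
    finally show ?thesis .
  qed
  have "m * (1 - S) * D = m * S * Q m S"
  proof -
    have "m * (1 - S) * D = D * (m * (1 - S))" by simp
    also have "\<dots> = D * ((c1 + m) * I1 + (c2 + m) * I2)" using E3 by simp
    also have "\<dots> = (c1 + m) * (D * I1) + (c2 + m) * (D * I2)" by (simp add: algebra_simps)
    finally have "m * (1 - S) * D = (c1 + m) * (D * I1) + (c2 + m) * (D * I2)" .
    thus ?thesis using DI1 DI2 by (simp add: Q_def algebra_simps)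
  qed
  hence FD: "(1 - S) * D = S * Q m S" using m by simp
  have Dl: "Dl m S = D" by (simp add: Dl_def D_def u_def v_def)
  have F0: "F m S = 0" using FD Dl by (simp add: F_def)
  have Xa0: "Xa m S > 0" using u0 v0 S0 c2 m p0 q0 unfolding Xa_def u_def[symmetric] v_def[symmetric]
    by (intro mult_pos_pos add_pos_pos divide_pos_pos) auto
  have Xb0: "Xb m S > 0" using u0 v0 S0 c1 m p0 q0 unfolding Xb_def u_def[symmetric] v_def[symmetric]
    by (intro mult_pos_pos add_pos_pos divide_pos_pos) auto
  have Q0: "Q m S > 0" unfolding Q_def using Xa0 Xb0 c1 c2 m by (intro add_pos_pos mult_pos_pos) auto
  have I1e: "I1 = m * (1 - S) * Xa m S / Q m S"
  proof -
    have "S * Q m S * I1 = ((1 - S) * D) * I1" using FD by simp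
    also have "\<dots> = (1 - S) * (D * I1)" by simp
    finally have "S * (Q m S * I1) = S * (m * (1 - S) * Xa m S)" using DI1 by (simp add: algebra_simps)
    hence "Q m S * I1 = m * (1 - S) * Xa m S" using S0 by simp
    thus ?thesis using Q0 by (simp add: field_simps)
  qed
  have I2e: "I2 = m * (1 - S) * Xb m S / Q m S"
  proof -
    have "S * Q m S * I2 = ((1 - S) * D) * I2" using FD by simp
    also have "\<dots> = (1 - S) * (D * I2)" by simp
    finally have "S * (Q m S * I2) = S * (m * (1 - S) * Xb m S)" using DI2 by (simp add: algebra_simps)
    hence "Q m S * I2 = m * (1 - S) * Xb m S" using S0 by simp
    thus ?thesis using Q0 by (simp add: field_simps)
  qed
  have R3e: "R3 = (c1 * J1 + c2 * J2) / m" using e8 m by (simp add: field_simps)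
  show ?thesis
    using S0 u0 v0 S1 F0 I1e I2e J1e J2e R1e R2e R3e
    by (simp add: st_def Let_def u_def v_def)
qed

lemma sum_rhs:
  fixes S I1 I2 J1 J2 R1 R2 R3 :: real
  shows "(m - b1 * (I1 + J1) * S - b2 * (I2 + J2) * S - m * S) +
     (b1 * S * (I1 + J1) - (m + c1) * I1) + (b2 * S * (I2 + J2) - (m + c2) * I2) +
     (b1 * q * R2 * (I1 + J1) - (m + c1) * J1) + (b2 * p * R1 * (I2 + J2) - (m + c2) * J2) +
     (c1 * I1 - b2 * p * (I2 + J2) * R1 - m * R1) + (c2 * I2 - b1 * q * (I1 + J1) * R2 - m * R2) +
     (c1 * J1 + c2 * J2 - m * R3) = m * (1 - (S + I1 + I2 + J1 + J2 + R1 + R2 + R3))"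
  by (simp add: algebra_simps)

lemma Xa_Xb_id1: "c1 * S * Xa m S - (c2 + m) * (B m - S) * Xb m S = (B m - S) * Dl m S / p"
  using p0 q0 by (simp add: Xa_def Xb_def Dl_def field_simps power2_eq_square; algebra?)

lemma Xa_Xb_id2: "c2 * S * Xb m S - (c1 + m) * (A m - S) * Xa m S = (A m - S) * Dl m S / q"
  using p0 q0 by (simp add: Xa_def Xb_def Dl_def field_simps power2_eq_square; algebra?)

lemma construct:
  assumes m: "m > 0" and S0: "0 < S" and Sa: "S < A m" and Sb: "S < B m" and S1: "S < 1"
    and F0: "F m S = 0"
  shows "steady_state b1 b2 c1 c2 p q m (st m S) \<and> feasible (st m S) \<and>
         I1_of (st m S) > 0 \<and> I2_of (st m S) > 0 \<and> S_of (st m S) = S"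
proof -
  note p0 q0 c1 c2 b1 b2
  define u where "u = A m - S"
  define v where "v = B m - S"
  have u0: "u > 0" and v0: "v > 0" using Sa Sb by (auto simp: u_def v_def)
  have Xa0: "Xa m S > 0" using u0 v0 S0 c2 m p0 q0 unfolding Xa_def u_def[symmetric] v_def[symmetric]
    by (intro mult_pos_pos add_pos_pos divide_pos_pos) auto
  have Xb0: "Xb m S > 0" using u0 v0 S0 c1 m p0 q0 unfolding Xb_def u_def[symmetric] v_def[symmetric]
    by (intro mult_pos_pos add_pos_pos divide_pos_pos) auto
  have Q0: "Q m S > 0" unfolding Q_def using Xa0 Xb0 c1 c2 m by (intro add_pos_pos mult_pos_pos) auto
  have FD: "(1 - S) * Dl m S = S * Q m S" using F0 by (simp add: F_def)
  define I1 where "I1 = m * (1 - S) * Xa m S / Q m S"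
  define I2 where "I2 = m * (1 - S) * Xb m S / Q m S"
  define J1 where "J1 = I1 * u / S"
  define J2 where "J2 = I2 * v / S"
  define R1 where "R1 = v / p"
  define R2 where "R2 = u / q"
  define R3 where "R3 = (c1 * J1 + c2 * J2) / m"
  have stE: "st m S = (S, I1, I2, J1, J2, R1, R2, R3)"
    by (simp add: st_def Let_def I1_def I2_def J1_def J2_def R1_def R2_def R3_def u_def v_def)
  have I10: "I1 > 0" unfolding I1_def using m S1 Xa0 Q0 by simp
  have I20: "I2 > 0" unfolding I2_def using m S1 Xb0 Q0 by simp
  have J10: "J1 > 0" unfolding J1_def using I10 u0 S0 by simp
  have J20: "J2 > 0" unfolding J2_def using I20 v0 S0 by simp
  have R10: "R1 > 0" unfolding R1_def using v0 p0 by simp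
  have R20: "R2 > 0" unfolding R2_def using u0 q0 by simp
  have R30: "R3 > 0" unfolding R3_def using J10 J20 c1 c2 m by (intro divide_pos_pos add_pos_pos mult_pos_pos) auto
  have bA: "b1 * A m = c1 + m" using b1 by (simp add: A_def)
  have bB: "b2 * B m = c2 + m" using b2 by (simp add: B_def)
  have L1: "(I1 + J1) * S = I1 * A m" using S0 by (simp add: J1_def u_def field_simps)
  have L2: "(I2 + J2) * S = I2 * B m" using S0 by (simp add: J2_def v_def field_simps)
  have L1': "b1 * (I1 + J1) = (c1 + m) * I1 / S"
  proof -
    have "b1 * (I1 + J1) * S = (c1 + m) * I1" using L1 bA by (metis mult.assoc mult.commute)
    thus ?thesis using S0 by (simp add: field_simps)
  qed
  have L2': "b2 * (I2 + J2) = (c2 + m) * I2 / S"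
  proof -
    have "b2 * (I2 + J2) * S = (c2 + m) * I2" using L2 bB by (metis mult.assoc mult.commute)
    thus ?thesis using S0 by (simp add: field_simps)
  qed
  have Ea: "(c1 + m) * I1 + (c2 + m) * I2 = m * (1 - S)"
  proof -
    have "(c1 + m) * I1 + (c2 + m) * I2 = m * (1 - S) * Q m S / Q m S"
      by (simp add: I1_def I2_def Q_def add_divide_distrib[symmetric] algebra_simps)
    thus ?thesis using Q0 by simp
  qed
  have E1: "c1 * S * I1 - (c2 + m) * v * I2 = m * v * S / p"
  proof -
    have "c1 * S * I1 - (c2 + m) * v * I2 = m * (1 - S) * (c1 * S * Xa m S - (c2 + m) * v * Xb m S) / Q m S"
      using Q0 by (simp add: I1_def I2_def field_simps; algebra?)
    also have "\<dots> = m * ((1 - S) * Dl m S) * v / p / Q m S"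
      using Xa_Xb_id1[of S m] by (simp add: v_def algebra_simps)
    also have "\<dots> = m * (S * Q m S) * v / p / Q m S" using FD by simp
    also have "\<dots> = m * v * S / p" using Q0 by (simp add: field_simps)
    finally show ?thesis .
  qed
  have E2: "c2 * S * I2 - (c1 + m) * u * I1 = m * u * S / q"
  proof -
    have "c2 * S * I2 - (c1 + m) * u * I1 = m * (1 - S) * (c2 * S * Xb m S - (c1 + m) * u * Xa m S) / Q m S"
      using Q0 by (simp add: I1_def I2_def field_simps; algebra?)
    also have "\<dots> = m * ((1 - S) * Dl m S) * u / q / Q m S"
      using Xa_Xb_id2[of S m] by (simp add: u_def algebra_simps)
    also have "\<dots> = m * (S * Q m S) * u / q / Q m S" using FD by simp
    also have "\<dots> = m * u * S / q" using Q0 by (simp add: field_simps)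
    finally show ?thesis .
  qed
  have e1: "m - b1 * (I1 + J1) * S - b2 * (I2 + J2) * S - m * S = 0"
    using L1' L2' Ea S0 by (simp add: field_simps)
  have e2: "b1 * S * (I1 + J1) - (m + c1) * I1 = 0" using L1' S0 by (simp add: field_simps)
  have e3: "b2 * S * (I2 + J2) - (m + c2) * I2 = 0" using L2' S0 by (simp add: field_simps)
  have e4: "b1 * q * R2 * (I1 + J1) - (m + c1) * J1 = 0"
  proof -
    have "b1 * q * R2 * (I1 + J1) = u * (b1 * (I1 + J1))" using q0 by (simp add: R2_def)
    also have "\<dots> = u * ((c1 + m) * I1 / S)" using L1' by simp
    also have "\<dots> = (m + c1) * J1" using S0 by (simp add: J1_def field_simps)
    finally show ?thesis by simp
  qed
  have e5: "b2 * p * R1 * (I2 + J2) - (m + c2) * J2 = 0"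
  proof -
    have "b2 * p * R1 * (I2 + J2) = v * (b2 * (I2 + J2))" using p0 by (simp add: R1_def)
    also have "\<dots> = v * ((c2 + m) * I2 / S)" using L2' by simp
    also have "\<dots> = (m + c2) * J2" using S0 by (simp add: J2_def field_simps)
    finally show ?thesis by simp
  qed
  have e6: "c1 * I1 - b2 * p * (I2 + J2) * R1 - m * R1 = 0"
  proof -
    have "c1 * I1 - b2 * p * (I2 + J2) * R1 - m * R1 = c1 * I1 - v * (b2 * (I2 + J2)) - m * v / p"
      using p0 by (simp add: R1_def)
    also have "\<dots> = c1 * I1 - v * ((c2 + m) * I2 / S) - m * v / p" using L2' by simp
    also have "\<dots> = (c1 * S * I1 - (c2 + m) * v * I2 - m * v * S / p) / S"
      using S0 p0 by (simp add: field_simps)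
    finally have "c1 * I1 - b2 * p * (I2 + J2) * R1 - m * R1 = (c1 * S * I1 - (c2 + m) * v * I2 - m * v * S / p) / S" .
    thus ?thesis using E1 by simp
  qed
  have e7: "c2 * I2 - b1 * q * (I1 + J1) * R2 - m * R2 = 0"
  proof -
    have "c2 * I2 - b1 * q * (I1 + J1) * R2 - m * R2 = c2 * I2 - u * (b1 * (I1 + J1)) - m * u / q"
      using q0 by (simp add: R2_def)
    also have "\<dots> = c2 * I2 - u * ((c1 + m) * I1 / S) - m * u / q" using L1' by simp
    also have "\<dots> = (c2 * S * I2 - (c1 + m) * u * I1 - m * u * S / q) / S"
      using S0 q0 by (simp add: field_simps)
    finally have "c2 * I2 - b1 * q * (I1 + J1) * R2 - m * R2 = (c2 * S * I2 - (c1 + m) * u * I1 - m * u * S / q) / S" .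
    thus ?thesis using E2 by simp
  qed
  have e8: "c1 * J1 + c2 * J2 - m * R3 = 0" using m by (simp add: R3_def)
  have "m * (1 - (S + I1 + I2 + J1 + J2 + R1 + R2 + R3)) = 0"
    apply (subst sum_rhs[symmetric])
    using e1 e2 e3 e4 e5 e6 e7 e8 by simp
  hence tot: "S + I1 + I2 + J1 + J2 + R1 + R2 + R3 = 1" using m by simp
  show ?thesis unfolding stE steady_state_def feasible_def I1_of_def I2_of_def S_of_def
    using e1 e2 e3 e4 e5 e6 e7 e8 tot S0 I10 I20 J10 J20 R10 R20 R30 by simp
qed

lemma F_at_A: "F m (A m) = c2 * (A m)^2 * ((1 - A m) * c1 - (c1 + m) * (B m - A m) / p)"
  using p0 q0 by (simp add: F_def Dl_def Q_def Xa_def Xb_def field_simps power2_eq_square; algebra?)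

lemma F_at_B: "F m (B m) = c1 * (B m)^2 * ((1 - B m) * c2 - (c2 + m) * (A m - B m) / q)"
  using p0 q0 by (simp add: F_def Dl_def Q_def Xa_def Xb_def field_simps power2_eq_square; algebra?)

lemma F_at_0: "F m 0 = - ((c1 + m) * (c2 + m) * A m * B m)"
  by (simp add: F_def Dl_def)

lemma Om_gen:
  fixes a bb c m pp :: real
  assumes a: "a > 0" and bb: "bb > 0" and c: "c > 0" and m: "m > 0" and pp: "0 < pp" "pp \<le> 1"
  shows "Omega_i m c pp (1 / a) (1 / bb) \<longleftrightarrow> a < 1 \<and> (1 - a) * c * pp - (c + m) * (bb - a) > 0"
proof (cases "a < 1")
  case True
  have D: "(1 + pp * (1 / a - 1)) * c + m > 0"
  proof -
    have "1 / a - 1 > 0" using True a by (simp add: field_simps)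
    hence "pp * (1 / a - 1) \<ge> 0" using pp by simp
    thus ?thesis using c m by (smt (verit) mult_pos_pos)
  qed
  define D where "D = (1 + pp * (1 / a - 1)) * c + m"
  have D0: "D > 0" using D by (simp add: D_def)
  have aD: "a * D = a * c + pp * (1 - a) * c + a * m" using a by (simp add: D_def field_simps)
  have "1 / bb > (c + m) * (1 / a) / D \<longleftrightarrow> (c + m) * bb < a * D"
    using a bb D0 by (simp add: field_simps)
  also have "\<dots> \<longleftrightarrow> (1 - a) * c * pp - (c + m) * (bb - a) > 0"
  proof -
    have "(1 - a) * c * pp - (c + m) * (bb - a) = (a * c + pp * (1 - a) * c + a * m) - (c + m) * bb"
      by (simp add: algebra_simps)
    thus ?thesis using aD by linarith
  qed
  finally show ?thesis using True a unfolding Omega_i_def D_def by (simp add: field_simps)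
next
  case False
  thus ?thesis using a unfolding Omega_i_def by (simp add: field_simps)
qed

lemma rA: "m \<ge> 0 \<Longrightarrow> repr_num b1 c1 m = 1 / A m" by (simp add: repr_num_def A_def)
lemma rB: "m \<ge> 0 \<Longrightarrow> repr_num b2 c2 m = 1 / B m" by (simp add: repr_num_def B_def)

lemma Omega_iff:
  assumes m: "m > 0"
  shows "Omega m c1 c2 p q (repr_num b1 c1 m) (repr_num b2 c2 m) \<longleftrightarrow>
    A m < 1 \<and> B m < 1 \<and> F m (A m) > 0 \<and> F m (B m) > 0"
proof -
  have a: "A m > 0" and b: "B m > 0" using m A_pos B_pos by auto
  have 1: "Omega_i m c1 p (1 / A m) (1 / B m) \<longleftrightarrow> A m < 1 \<and> (1 - A m) * c1 * p - (c1 + m) * (B m - A m) > 0"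
    using Om_gen[OF a b c1 m p0 p1] .
  have 2: "Omega_i m c2 q (1 / B m) (1 / A m) \<longleftrightarrow> B m < 1 \<and> (1 - B m) * c2 * q - (c2 + m) * (A m - B m) > 0"
    using Om_gen[OF b a c2 m q0 q1] .
  have 3: "F m (A m) > 0 \<longleftrightarrow> (1 - A m) * c1 * p - (c1 + m) * (B m - A m) > 0"
  proof -
    have "F m (A m) = c2 * (A m)^2 / p * ((1 - A m) * c1 * p - (c1 + m) * (B m - A m))"
      using p0 by (simp add: F_at_A field_simps)
    moreover have "c2 * (A m)^2 / p > 0" using c2 a p0 by simp
    ultimately show ?thesis by (metis zero_less_mult_pos mult_pos_pos)
  qed
  have 4: "F m (B m) > 0 \<longleftrightarrow> (1 - B m) * c2 * q - (c2 + m) * (A m - B m) > 0"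
  proof -
    have "F m (B m) = c1 * (B m)^2 / q * ((1 - B m) * c2 * q - (c2 + m) * (A m - B m))"
      using q0 by (simp add: F_at_B field_simps)
    moreover have "c1 * (B m)^2 / q > 0" using c1 b q0 by simp
    ultimately show ?thesis by (metis zero_less_mult_pos mult_pos_pos)
  qed
  show ?thesis using 1 2 3 4 m unfolding Omega_def rA[OF less_imp_le[OF m]] rB[OF less_imp_le[OF m]] by blast
qed

end

context epi begin

definition P2 :: "real \<Rightarrow> real" where "P2 m = p*(1-q)*B m + q*(1-p)*A m"
definition P1 :: "real \<Rightarrow> real" where "P1 m = p*q*(A m + B m) - (p+q-p*q)*A m*B m"
definition P0 :: "real \<Rightarrow> real" where "P0 m = - p*q*A m*B m"
definition Fh :: "real \<Rightarrow> real \<Rightarrow> real" where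
  "Fh m S = c1*c2/(p*q) * (P2 m * S^2 + P1 m * S + P0 m)"
definition Ee :: "real \<Rightarrow> real \<Rightarrow> real" where
  "Ee m S = (- (S^2) * (B m - S) * c2 / p - S^2 * (A m - S) * c1 / q
     - (A m - S) * (B m - S) * ((1 - S) + S * (1/p + 1/q)) * (c1 + c2 + m))"

lemma F_split_gen:
  fixes S m a b :: real
  assumes "p \<noteq> 0" "q \<noteq> 0"
  shows "(1 - S) * (c1 * c2 * S^2 - (c1 + m) * (c2 + m) * (a - S) * (b - S))
  - S * ((c1 + m) * ((b - S) * (c2 * S / p + (c2 + m) * (a - S) / q)) + (c2 + m) * ((a - S) * (c1 * S / q + (c1 + m) * (b - S) / p)))
  = c1*c2/(p*q) * ((p*(1-q)*b + q*(1-p)*a) * S^2 + (p*q*(a + b) - (p+q-p*q)*a*b) * S + (- p*q*a*b))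
   + m * (- (S^2) * (b - S) * c2 / p - S^2 * (a - S) * c1 / q
     - (a - S) * (b - S) * ((1 - S) + S * (1/p + 1/q)) * (c1 + c2 + m))"
  using assms
  apply (simp add: field_simps)
  apply algebra
  done

lemma F_split: "F m S = Fh m S + m * Ee m S"
proof -
  have "p \<noteq> 0" "q \<noteq> 0" using p0 q0 by auto
  from F_split_gen[OF this, of S m "A m" "B m"] show ?thesis
    by (simp add: F_def Dl_def Q_def Xa_def Xb_def Fh_def P2_def P1_def P0_def Ee_def)
qed

definition E0 :: "real \<Rightarrow> real" where "E0 m = - (c1 + c2 + m) * A m * B m"
definition E1 :: "real \<Rightarrow> real" where
  "E1 m = - (c1 + c2 + m) * (A m * B m * (1/p + 1/q - 1) - (A m + B m))"
definition E2 :: "real \<Rightarrow> real" where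
  "E2 m = - c2 / p * B m - c1 / q * A m - (c1 + c2 + m) * (1 - (A m + B m) * (1/p + 1/q - 1))"
definition E3 :: "real \<Rightarrow> real" where
  "E3 m = c2 / p + c1 / q - (c1 + c2 + m) * (1/p + 1/q - 1)"

lemma Ee_cubic: "Ee m S = E0 m + E1 m * S + E2 m * S^2 + E3 m * S^3"
  using p0 q0 by (simp add: Ee_def E0_def E1_def E2_def E3_def field_simps power2_eq_square power3_eq_cube; algebra?)

definition kk0 :: "real \<Rightarrow> real" where "kk0 m = c1*c2/(p*q) * P0 m + m * E0 m"
definition kk1 :: "real \<Rightarrow> real" where "kk1 m = c1*c2/(p*q) * P1 m + m * E1 m"
definition kk2 :: "real \<Rightarrow> real" where "kk2 m = c1*c2/(p*q) * P2 m + m * E2 m"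
definition kk3 :: "real \<Rightarrow> real" where "kk3 m = m * E3 m"

lemma F_cubic: "F m S = kk0 m + kk1 m * S + kk2 m * S^2 + kk3 m * S^3"
  unfolding F_split Ee_cubic Fh_def kk0_def kk1_def kk2_def kk3_def
  by (simp add: algebra_simps)

lemma E3_le: "m \<ge> 0 \<Longrightarrow> E3 m \<le> - m"
proof -
  assume m: "m \<ge> 0"
  have ip: "1 / p \<ge> 1" using p0 p1 by simp
  have iq: "1 / q \<ge> 1" using q0 q1 by simp
  have "E3 m = c1 * (1 - 1/p) + c2 * (1 - 1/q) - m * (1/p + 1/q - 1)"
    unfolding E3_def using p0 q0 by (simp add: field_simps)
  moreover have "c1 * (1 - 1/p) \<le> 0" using c1 ip by (simp add: mult_nonneg_nonpos)
  moreover have "c2 * (1 - 1/q) \<le> 0" using c2 iq by (simp add: mult_nonneg_nonpos)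
  moreover have "m * (1/p + 1/q - 1) \<ge> m * 1" using m ip iq by (intro mult_left_mono) auto
  ultimately show ?thesis by linarith
qed

lemma kk3_neg: "m > 0 \<Longrightarrow> kk3 m < 0"
proof -
  assume m: "m > 0"
  have "E3 m < 0" using E3_le[of m] m by simp
  thus ?thesis using m by (simp add: kk3_def mult_pos_neg)
qed

lemma cont_kk0: "isCont kk0 0"
  unfolding kk0_def[abs_def] P0_def P1_def P2_def E0_def E1_def E2_def E3_def A_def B_def
  using b1 b2 p0 q0 by (intro continuous_intros) auto

lemma cont_kk1: "isCont kk1 0"
  unfolding kk1_def[abs_def] P0_def P1_def P2_def E0_def E1_def E2_def E3_def A_def B_def
  using b1 b2 p0 q0 by (intro continuous_intros) auto

lemma cont_kk2: "isCont kk2 0"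
  unfolding kk2_def[abs_def] P0_def P1_def P2_def E0_def E1_def E2_def E3_def A_def B_def
  using b1 b2 p0 q0 by (intro continuous_intros) auto

lemma cont_kk3: "isCont kk3 0"
  unfolding kk3_def[abs_def] P0_def P1_def P2_def E0_def E1_def E2_def E3_def A_def B_def
  using b1 b2 p0 q0 by (intro continuous_intros) auto

lemma cubic_sign:
  fixes f :: "real \<Rightarrow> real" and k0 k1 k2 k3 X :: real
  assumes f: "\<And>S. f S = k0 + k1 * S + k2 * S^2 + k3 * S^3" and k3: "k3 < 0"
    and f0: "f 0 < 0" and X: "X > 0" and fX: "f X > 0"
  shows "\<exists>r. 0 < r \<and> r < X \<and> (\<forall>S. 0 \<le> S \<and> S \<le> X \<longrightarrow>
     (S < r \<longrightarrow> f S < 0) \<and> (S = r \<longrightarrow> f S = 0) \<and> (r < S \<longrightarrow> f S > 0))"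
proof -
  have fe: "f = (\<lambda>S. k0 + k1 * S + k2 * S^2 + k3 * S^3)" using f by (rule ext)
  have "\<forall>x. 0 \<le> x \<and> x \<le> X \<longrightarrow> isCont f x" unfolding fe by (intro allI impI continuous_intros)
  then obtain r where r: "0 \<le> r" "r \<le> X" "f r = 0" using IVT[of f 0 0 X] f0 fX X by auto
  have r0: "r > 0" using r f0 by (metis order_le_less)
  have rX: "r < X" using r fX by (metis order_le_less less_irrefl)
  define G where "G S = k3 * S^2 + (k3 * r + k2) * S + (k3 * r^2 + k2 * r + k1)" for S
  have fG: "f S = (S - r) * G S" for S
  proof -
    have "f S = f S - f r" using r by simp
    also have "\<dots> = (S - r) * G S" unfolding f G_def by (simp add: algebra_simps power2_eq_square power3_eq_cube)
    finally show ?thesis .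
  qed
  have G0: "G 0 > 0"
  proof -
    have "f 0 = - r * G 0" using fG[of 0] by simp
    hence "r * G 0 > 0" using f0 by simp
    thus ?thesis using r0 by (rule zero_less_mult_pos)
  qed
  have GX: "G X > 0"
  proof -
    have "f X = (X - r) * G X" using fG by simp
    hence "(X - r) * G X > 0" using fX by simp
    moreover have "X - r > 0" using rX by simp
    ultimately show ?thesis by (rule zero_less_mult_pos)
  qed
  have Gpos: "G S > 0" if S: "0 \<le> S" "S \<le> X" for S
  proof -
    have id: "X * G S = (X - S) * G 0 + S * G X + k3 * X * S * (S - X)"
      unfolding G_def by (simp add: algebra_simps power2_eq_square)
    have "k3 * X * S * (S - X) \<ge> 0"
    proof -
      have "k3 * X \<le> 0" using k3 X by (simp add: mult_neg_pos less_imp_le)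
      moreover have "S * (S - X) \<le> 0" using S by (simp add: mult_nonneg_nonpos)
      ultimately have "(k3 * X) * (S * (S - X)) \<ge> 0" by (simp add: mult_nonpos_nonpos)
      thus ?thesis by (simp add: algebra_simps)
    qed
    moreover have "(X - S) * G 0 + S * G X > 0"
    proof (cases "S = 0")
      case True thus ?thesis using X G0 by simp
    next
      case False
      hence "S * G X > 0" using S GX by simp
      moreover have "(X - S) * G 0 \<ge> 0" using S G0 by simp
      ultimately show ?thesis by linarith
    qed
    ultimately have "X * G S > 0" using id by linarith
    thus ?thesis using X by (simp add: zero_less_mult_iff)
  qed
  show ?thesis
  proof (intro exI conjI allI impI)
    fix S assume S: "0 \<le> S \<and> S \<le> X"
    show "S < r \<Longrightarrow> f S < 0" using fG[of S] Gpos[of S] S by (simp add: mult_neg_pos)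
    show "S = r \<Longrightarrow> f S = 0" using r by simp
    show "r < S \<Longrightarrow> f S > 0" using fG[of S] Gpos[of S] S by simp
  qed (use r0 rX in auto)
qed

lemma tk: "(kk0 \<longlongrightarrow> kk0 0) (at_right 0)" "(kk1 \<longlongrightarrow> kk1 0) (at_right 0)"
  "(kk2 \<longlongrightarrow> kk2 0) (at_right 0)" "(kk3 \<longlongrightarrow> kk3 0) (at_right 0)"
  using isCont_tendsto_compose[OF cont_kk0 tendsto_ident_at]
    isCont_tendsto_compose[OF cont_kk1 tendsto_ident_at]
    isCont_tendsto_compose[OF cont_kk2 tendsto_ident_at]
    isCont_tendsto_compose[OF cont_kk3 tendsto_ident_at]
  by auto

lemma F_neg0: "m \<ge> 0 \<Longrightarrow> F m 0 < 0"
  using A_pos[of m] B_pos[of m] c1 c2 unfolding F_at_0 by (simp add: mult_pos_pos)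

lemma abs_pow_le: "0 \<le> S \<Longrightarrow> S \<le> 1 \<Longrightarrow> \<bar>x * S ^ n\<bar> \<le> \<bar>x\<bar>" for x S :: real
proof -
  assume "0 \<le> S" "S \<le> 1"
  hence "S ^ n \<le> 1" "S ^ n \<ge> 0" by (auto intro: power_le_one)
  thus ?thesis by (simp add: abs_mult mult_left_le)
qed

lemma sign_struct:
  "\<exists>\<mu>1>0. \<forall>m. 0 < m \<and> m < \<mu>1 \<longrightarrow> (\<exists>r>0. \<forall>S. 0 < S \<and> S \<le> 1 \<longrightarrow>
     (S < r \<longrightarrow> F m S < 0) \<and> (S = r \<longrightarrow> F m S = 0) \<and> (r < S \<longrightarrow> F m S > 0))"
proof (cases "F 0 2 > 0")
  case True
  have lim: "((\<lambda>m. F m 2) \<longlongrightarrow> F 0 2) (at_right 0)"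
    unfolding F_cubic using tk by (intro tendsto_intros)
  have "eventually (\<lambda>m. F m 2 > 0) (at_right 0)" using order_tendstoD(1)[OF lim True] .
  moreover have "eventually (\<lambda>m. m > 0) (at_right (0::real))" by (rule eventually_at_right_less)
  ultimately have "eventually (\<lambda>m. m > 0 \<and> F m 2 > 0) (at_right 0)"
    by (simp add: eventually_conj_iff)
  then obtain b where b: "b > 0" and hb: "\<And>m. m > 0 \<Longrightarrow> m < b \<Longrightarrow> F m 2 > 0"
    unfolding eventually_at_right_field by auto
  show ?thesis
  proof (rule exI[of _ b], intro conjI allI impI b)
    fix m assume m: "0 < m \<and> m < b"
    have "\<exists>r. 0 < r \<and> r < 2 \<and> (\<forall>S. 0 \<le> S \<and> S \<le> 2 \<longrightarrow>
       (S < r \<longrightarrow> F m S < 0) \<and> (S = r \<longrightarrow> F m S = 0) \<and> (r < S \<longrightarrow> F m S > 0))"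
      using cubic_sign[of "F m" "kk0 m" "kk1 m" "kk2 m" "kk3 m" 2] F_cubic kk3_neg F_neg0 hb m
      by auto
    then obtain r where r: "0 < r" and hr: "\<forall>S. 0 \<le> S \<and> S \<le> 2 \<longrightarrow>
       (S < r \<longrightarrow> F m S < 0) \<and> (S = r \<longrightarrow> F m S = 0) \<and> (r < S \<longrightarrow> F m S > 0)" by blast
    show "\<exists>r>0. \<forall>S. 0 < S \<and> S \<le> 1 \<longrightarrow>
     (S < r \<longrightarrow> F m S < 0) \<and> (S = r \<longrightarrow> F m S = 0) \<and> (r < S \<longrightarrow> F m S > 0)"
    proof (intro exI[of _ r] conjI allI impI r)
      fix S :: real assume S: "0 < S \<and> S \<le> 1"
      hence "0 \<le> S \<and> S \<le> 2" by simp
      then have h: "(S < r \<longrightarrow> F m S < 0) \<and> (S = r \<longrightarrow> F m S = 0) \<and> (r < S \<longrightarrow> F m S > 0)"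
        using hr by blast
      show "S < r \<Longrightarrow> F m S < 0" using h by blast
      show "S = r \<Longrightarrow> F m S = 0" using h by blast
      show "r < S \<Longrightarrow> F m S > 0" using h by blast
    qed
  qed
next
  case False
  define K where "K = c1 * c2 / (p * q)"
  have K0: "K > 0" unfolding K_def using c1 c2 p0 q0 by simp
  have P20: "P2 0 \<ge> 0" unfolding P2_def using p0 q0 p1 q1 A_pos[of 0] B_pos[of 0] by simp
  have F0e: "F 0 S = K * (P2 0 * S^2 + P1 0 * S + P0 0)" for S
    using F_split[of 0 S] by (simp add: Fh_def K_def)
  have f00: "F 0 0 < 0" using F_neg0 by simp
  have "F 0 0 + F 0 2 - 2 * F 0 1 = 2 * K * P2 0" unfolding F0e by (simp add: algebra_simps)
  moreover have "2 * K * P2 0 \<ge> 0" using K0 P20 by simp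
  ultimately have f01: "F 0 1 < 0" using False f00 by linarith
  define \<delta> where "\<delta> = min (- F 0 0) (- F 0 1)"
  have d0: "\<delta> > 0" unfolding \<delta>_def using f00 f01 by simp
  have F0le: "F 0 S \<le> - \<delta>" if S: "0 \<le> S" "S \<le> 1" for S
  proof -
    have "(1 - S) * F 0 0 + S * F 0 1 - F 0 S = K * P2 0 * (S * (1 - S))"
      unfolding F0e by (simp add: algebra_simps power2_eq_square)
    moreover have "K * P2 0 * (S * (1 - S)) \<ge> 0" using K0 P20 S by simp
    moreover have "(1 - S) * F 0 0 \<le> (1 - S) * (- \<delta>)" using S unfolding \<delta>_def
      by (intro mult_left_mono) auto
    moreover have "S * F 0 1 \<le> S * (- \<delta>)" using S unfolding \<delta>_def
      by (intro mult_left_mono) auto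
    ultimately show ?thesis by (simp add: algebra_simps)
  qed
  define dd where "dd m = \<bar>kk0 m - kk0 0\<bar> + \<bar>kk1 m - kk1 0\<bar> + \<bar>kk2 m - kk2 0\<bar> + \<bar>kk3 m - kk3 0\<bar>" for m
  have "(dd \<longlongrightarrow> \<bar>kk0 0 - kk0 0\<bar> + \<bar>kk1 0 - kk1 0\<bar> + \<bar>kk2 0 - kk2 0\<bar> + \<bar>kk3 0 - kk3 0\<bar>) (at_right 0)"
    unfolding dd_def[abs_def] using tk by (intro tendsto_intros)
  hence "(dd \<longlongrightarrow> 0) (at_right 0)" by simp
  hence "eventually (\<lambda>m. dd m < \<delta>) (at_right 0)" using order_tendstoD(2) d0 by blast
  then obtain b where b: "b > 0" and hb: "\<And>m. m > 0 \<Longrightarrow> m < b \<Longrightarrow> dd m < \<delta>"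
    unfolding eventually_at_right_field by auto
  show ?thesis
  proof (rule exI[of _ b], intro conjI allI impI b)
    fix m assume m: "0 < m \<and> m < b"
    have neg: "F m S < 0" if S: "0 \<le> S" "S \<le> 1" for S
    proof -
      have "F m S - F 0 S = (kk0 m - kk0 0) * S^0 + (kk1 m - kk1 0) * S^1 + (kk2 m - kk2 0) * S^2 + (kk3 m - kk3 0) * S^3"
        unfolding F_cubic by (simp add: algebra_simps)
      also have "\<dots> \<le> dd m" unfolding dd_def
        using abs_pow_le[OF S, of "kk0 m - kk0 0" 0] abs_pow_le[OF S, of "kk1 m - kk1 0" 1]
          abs_pow_le[OF S, of "kk2 m - kk2 0" 2] abs_pow_le[OF S, of "kk3 m - kk3 0" 3]
        by linarith
      finally show ?thesis using hb[of m] m F0le[OF S] by linarith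
    qed
    show "\<exists>r>0. \<forall>S. 0 < S \<and> S \<le> 1 \<longrightarrow>
     (S < r \<longrightarrow> F m S < 0) \<and> (S = r \<longrightarrow> F m S = 0) \<and> (r < S \<longrightarrow> F m S > 0)"
      using neg by (intro exI[of _ 2]) auto
  qed
qed

end

context epi begin

definition Qh :: "real \<Rightarrow> real \<Rightarrow> real" where
  "Qh m S = c1 * c2 * (A m * (B m - S) / p + B m * (A m - S) / q)"
definition qe :: "real \<Rightarrow> real \<Rightarrow> real" where
  "qe m S = (B m - S) * c2 * S / p + (A m - S) * c1 * S / q + (c1 + c2 + m) * (A m - S) * (B m - S) * (1/p + 1/q)"
definition N1h :: "real \<Rightarrow> real \<Rightarrow> real" where
  "N1h m S = (1 - S) * (B m - S) * (c2 * (S / p + (A m - S) / q))"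
definition N2h :: "real \<Rightarrow> real \<Rightarrow> real" where
  "N2h m S = (1 - S) * (A m - S) * (c1 * (S / q + (B m - S) / p))"

lemma Fh_alt: "Fh m S = c1 * c2 * ((1 - S) * (S^2 - (A m - S) * (B m - S)) - S * (A m * (B m - S) / p + B m * (A m - S) / q))"
  using p0 q0 by (simp add: Fh_def P2_def P1_def P0_def field_simps power2_eq_square; algebra?)

lemma Q_split: "Q m S = Qh m S + m * qe m S"
  using p0 q0 by (simp add: Q_def Xa_def Xb_def Qh_def qe_def field_simps; algebra?)

lemma N1_split: "(1 - S) * Xa m S = N1h m S + m * ((1 - S) * (B m - S) * (A m - S) / q)"
  using p0 q0 by (simp add: Xa_def N1h_def field_simps; algebra?)

lemma N2_split: "(1 - S) * Xb m S = N2h m S + m * ((1 - S) * (A m - S) * (B m - S) / p)"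
  using p0 q0 by (simp add: Xb_def N2h_def field_simps; algebra?)

lemma b1_id: "N1h m S * (c1 * p * B m) - (S + p * (1 - S)) * (B m - S) * Qh m S = (B m - S) * Fh m S"
  using p0 q0 by (simp add: N1h_def Qh_def Fh_def P2_def P1_def P0_def field_simps power2_eq_square; algebra?)

lemma b2_id: "N2h m S * (c2 * q * A m) - (S + q * (1 - S)) * (A m - S) * Qh m S = (A m - S) * Fh m S"
  using p0 q0 by (simp add: N2h_def Qh_def Fh_def P2_def P1_def P0_def field_simps power2_eq_square; algebra?)

end


lemma le1_mult: "0 \<le> (x::real) \<Longrightarrow> x \<le> 1 \<Longrightarrow> 0 \<le> y \<Longrightarrow> y \<le> Y \<Longrightarrow> x * y \<le> Y"
  by (metis mult_left_le_one_le order_trans)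
lemma abs_le1_mult: "\<bar>x::real\<bar> \<le> 1 \<Longrightarrow> \<bar>y\<bar> \<le> Y \<Longrightarrow> \<bar>x * y\<bar> \<le> Y"
  by (simp add: abs_mult) (metis abs_ge_zero le1_mult)
lemma lip3:
  fixes Y z0 z1 r s Z Z1 :: real
  assumes r: "0 \<le> r" "r \<le> Y" and s: "0 \<le> s" "s \<le> Y" and Y: "Y \<le> 1"
    and Z: "\<bar>z0 + z1 * r\<bar> \<le> Z" and Z1: "\<bar>z1\<bar> \<le> Z1"
  shows "\<bar>(1 - r) * (Y - r) * (z0 + z1 * r) - (1 - s) * (Y - s) * (z0 + z1 * s)\<bar> \<le> (2 * Z + Z1) * \<bar>r - s\<bar>"
proof -
  have id: "(1 - r) * (Y - r) * (z0 + z1 * r) - (1 - s) * (Y - s) * (z0 + z1 * s)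
     = (r - s) * (- ((Y - r) * (z0 + z1 * r)) - (1 - s) * (z0 + z1 * r) + (1 - s) * (Y - s) * z1)"
    by (simp add: algebra_simps)
  have a1: "\<bar>(Y - r) * (z0 + z1 * r)\<bar> \<le> Z" using r Y Z by (intro abs_le1_mult) auto
  have a2: "\<bar>(1 - s) * (z0 + z1 * r)\<bar> \<le> Z" using s Y Z by (intro abs_le1_mult) auto
  have a3: "\<bar>(1 - s) * (Y - s) * z1\<bar> \<le> Z1"
  proof -
    have "\<bar>(1 - s) * (Y - s)\<bar> \<le> 1" using s Y by (simp add: abs_mult) (intro le1_mult; simp)
    thus ?thesis using Z1 by (rule abs_le1_mult)
  qed
  have "\<bar>- ((Y - r) * (z0 + z1 * r)) - (1 - s) * (z0 + z1 * r) + (1 - s) * (Y - s) * z1\<bar> \<le> 2 * Z + Z1"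
    using a1 a2 a3 by linarith
  hence h: "\<bar>r - s\<bar> * \<bar>- ((Y - r) * (z0 + z1 * r)) - (1 - s) * (z0 + z1 * r) + (1 - s) * (Y - s) * z1\<bar> \<le> \<bar>r - s\<bar> * (2 * Z + Z1)"
    by (rule mult_left_mono) simp
  show ?thesis unfolding id abs_mult using h by (simp only: mult.commute)
qed


lemma ratio_bound:
  fixes N N' D D' d1 d2 \<alpha> \<beta> Nm :: real
  assumes D: "D \<ge> d1" "d1 > 0" and D': "D' \<ge> d2" "d2 > 0"
    and a: "\<bar>N - N'\<bar> \<le> \<alpha>" and b: "\<bar>D - D'\<bar> \<le> \<beta>" and n: "\<bar>N'\<bar> \<le> Nm"
  shows "\<bar>N / D - N' / D'\<bar> \<le> \<alpha> / d1 + Nm * \<beta> / (d1 * d2)"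
proof -
  have Dp: "D > 0" "D' > 0" using D D' by auto
  have a0: "\<alpha> \<ge> 0" using a abs_ge_zero[of "N - N'"] by linarith
  have b0: "\<beta> \<ge> 0" using b abs_ge_zero[of "D - D'"] by linarith
  have n0: "Nm \<ge> 0" using n abs_ge_zero[of "N'"] by linarith
  have id: "N / D - N' / D' = (N - N') / D + N' * (D' - D) / (D * D')"
    using Dp by (simp add: field_simps)
  have t1: "\<bar>(N - N') / D\<bar> \<le> \<alpha> / d1"
  proof -
    have "\<bar>(N - N') / D\<bar> = \<bar>N - N'\<bar> / D" using Dp by simp
    also have "\<dots> \<le> \<alpha> / D" using a Dp by (simp add: divide_right_mono)
    also have "\<dots> \<le> \<alpha> / d1" using D a0 Dp by (simp add: divide_left_mono)
    finally show ?thesis .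
  qed
  have t2: "\<bar>N' * (D' - D) / (D * D')\<bar> \<le> Nm * \<beta> / (d1 * d2)"
  proof -
    have b': "\<bar>D' - D\<bar> \<le> \<beta>" using b by (simp add: abs_minus_commute)
    have nb: "\<bar>N'\<bar> * \<bar>D' - D\<bar> \<le> Nm * \<beta>"
      using mult_mono[OF n b' n0 abs_ge_zero] .
    have dd: "d1 * d2 \<le> D * D'" using mult_mono[OF D(1) D'(1)] D D' by simp
    have "\<bar>N' * (D' - D) / (D * D')\<bar> = \<bar>N'\<bar> * \<bar>D' - D\<bar> / (D * D')" using Dp by (simp add: abs_mult)
    also have "\<dots> \<le> Nm * \<beta> / (D * D')" using nb Dp by (simp add: divide_right_mono)
    also have "\<dots> \<le> Nm * \<beta> / (d1 * d2)"
      using dd D D' a0 n0 b0 by (intro divide_left_mono) auto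
    finally show ?thesis .
  qed
  show ?thesis unfolding id by (rule order_trans[OF abs_triangle_ineq add_mono[OF t1 t2]])
qed

context epi begin

lemma ip_le_iq: "1 / p \<le> 1 / q" using q0 qp by (simp add: divide_left_mono)
lemma one_le_ip: "1 \<le> 1 / p" using p0 p1 by simp
lemma one_le_iq: "1 \<le> 1 / q" using q0 q1 by simp
lemma c2p: "c2 / p \<le> c2 / q" using c2 q0 qp by (simp add: divide_left_mono)
lemma c1p: "c1 / p \<le> c1 / q" using c1 q0 qp by (simp add: divide_left_mono)

definition ME :: real where "ME = (c1 + c2) / q + (1 + 2 / q) * (c1 + c2 + 1)"

lemma Ee_bound:
  assumes m: "0 \<le> m" "m \<le> 1" and S: "0 \<le> S" "S \<le> A m" "S \<le> B m" and AB: "A m \<le> 1" "B m \<le> 1"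
  shows "\<bar>Ee m S\<bar> \<le> ME"
proof -
  define T1 where "T1 = S^2 * (B m - S) * (c2 / p)"
  define T2 where "T2 = S^2 * (A m - S) * (c1 / q)"
  define T3 where "T3 = ((A m - S) * (B m - S)) * (((1 - S) + S * (1/p + 1/q)) * (c1 + c2 + m))"
  have e: "Ee m S = - (T1 + T2 + T3)" unfolding Ee_def T1_def T2_def T3_def using p0 q0 by (simp add: field_simps; algebra?)
  have S1: "S \<le> 1" using S AB by linarith
  have s20: "0 \<le> S^2" by simp
  have s21: "S^2 \<le> 1" using S S1 by (simp add: power_le_one)
  have bs: "0 \<le> B m - S" "B m - S \<le> 1" using S AB by auto
  have as: "0 \<le> A m - S" "A m - S \<le> 1" using S AB by auto
  have sqb0: "0 \<le> S^2 * (B m - S)" using bs by simp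
  have sqb1: "S^2 * (B m - S) \<le> 1" using le1_mult[OF s20 s21 bs] .
  have sqa0: "0 \<le> S^2 * (A m - S)" using as by simp
  have sqa1: "S^2 * (A m - S) \<le> 1" using le1_mult[OF s20 s21 as] .
  have T1: "0 \<le> T1" "T1 \<le> c2 / q" unfolding T1_def
    using sqb0 c2 p0 apply simp
    using le1_mult[OF sqb0 sqb1 _ c2p] c2 p0 by simp
  have T2: "0 \<le> T2" "T2 \<le> c1 / q" unfolding T2_def
    using sqa0 c1 q0 apply simp
    using le1_mult[OF sqa0 sqa1, of "c1 / q" "c1 / q"] c1 q0 by simp
  have uv0: "0 \<le> (A m - S) * (B m - S)" using as bs by simp
  have uv1: "(A m - S) * (B m - S) \<le> 1" using le1_mult[OF as bs] .
  have f1: "0 \<le> (1 - S) + S * (1/p + 1/q)" using S S1 p0 q0 by simp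
  have f2: "(1 - S) + S * (1/p + 1/q) \<le> 1 + 2 / q"
  proof -
    have "1/p + 1/q \<le> 2 / q" using ip_le_iq by simp
    hence "S * (1/p + 1/q) \<le> 2 / q" using le1_mult[OF S(1) S1, of "1/p + 1/q" "2/q"] p0 q0 by simp
    thus ?thesis using S by simp
  qed
  have f3: "0 \<le> ((1 - S) + S * (1/p + 1/q)) * (c1 + c2 + m)" using f1 c1 c2 m by simp
  have f4: "((1 - S) + S * (1/p + 1/q)) * (c1 + c2 + m) \<le> (1 + 2 / q) * (c1 + c2 + 1)"
    using mult_mono[OF f2, of "c1 + c2 + m" "c1 + c2 + 1"] f1 c1 c2 m q0 by simp
  have T3: "0 \<le> T3" "T3 \<le> (1 + 2 / q) * (c1 + c2 + 1)" unfolding T3_def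
    using uv0 f3 apply simp
    using le1_mult[OF uv0 uv1 f3 f4] .
  have "\<bar>Ee m S\<bar> = T1 + T2 + T3" unfolding e using T1 T2 T3 by simp
  also have "\<dots> \<le> ME" unfolding ME_def using T1 T2 T3 by (simp add: add_divide_distrib)
  finally show ?thesis .
qed

lemma P2_bounds: "0 \<le> A m \<Longrightarrow> A m \<le> 1 \<Longrightarrow> 0 \<le> B m \<Longrightarrow> B m \<le> 1 \<Longrightarrow> 0 \<le> P2 m \<and> P2 m \<le> 2"
proof -
  assume a: "0 \<le> A m" "A m \<le> 1" and b: "0 \<le> B m" "B m \<le> 1"
  have pq: "0 \<le> p * (1 - q)" "p * (1 - q) \<le> 1" "0 \<le> q * (1 - p)" "q * (1 - p) \<le> 1"
    using p0 q0 p1 q1 le1_mult[of p "1 - q" 1] le1_mult[of q "1 - p" 1] by auto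
  have "p * (1 - q) * B m \<le> 1" using le1_mult[OF pq(1,2) b] .
  moreover have "q * (1 - p) * A m \<le> 1" using le1_mult[OF pq(3,4) a] .
  moreover have "0 \<le> p * (1 - q) * B m" using pq b by simp
  moreover have "0 \<le> q * (1 - p) * A m" using pq a by simp
  ultimately show ?thesis unfolding P2_def by linarith
qed

lemma P1_upper: "0 \<le> A m \<Longrightarrow> A m \<le> 1 \<Longrightarrow> 0 \<le> B m \<Longrightarrow> B m \<le> 1 \<Longrightarrow> P1 m \<le> 2"
proof -
  assume a: "0 \<le> A m" "A m \<le> 1" and b: "0 \<le> B m" "B m \<le> 1"
  have pq: "0 \<le> p * q" "p * q \<le> 1" using p0 q0 p1 q1 le1_mult[of p q 1] by auto
  have "p * q * (A m + B m) \<le> 2" using le1_mult[OF pq, of "A m + B m" 2] a b by simp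
  moreover have "0 \<le> (p + q - p * q) * A m * B m"
  proof -
    have "p + q - p * q = p + q * (1 - p)" by (simp add: algebra_simps)
    have "p * q \<le> p" using p0 q1 by (simp add: mult_left_le)
    hence "0 \<le> p + q - p * q" using q0 by linarith
    thus ?thesis using a b by simp
  qed
  ultimately show ?thesis unfolding P1_def by linarith
qed

lemma Fh_root:
  assumes "Fh m s = 0" shows "s * (P2 m * s + P1 m) = p * q * A m * B m"
proof -
  have "c1 * c2 / (p * q) \<noteq> 0" using c1 c2 p0 q0 by simp
  hence "P2 m * s^2 + P1 m * s + P0 m = 0" using assms unfolding Fh_def by simp
  thus ?thesis unfolding P0_def by (simp add: algebra_simps power2_eq_square)
qed

lemma s_lower:
  assumes s: "0 < s" "s \<le> 1" and Fs: "Fh m s = 0"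
    and AB: "0 < A m" "A m \<le> 1" "0 < B m" "B m \<le> 1"
  shows "p * q * A m * B m \<le> 4 * s"
proof -
  have P2: "0 \<le> P2 m" "P2 m \<le> 2" using P2_bounds AB by auto
  have P1: "P1 m \<le> 2" using P1_upper AB by auto
  have "P2 m * s \<le> 2" using le1_mult[of s "P2 m" 2] s P2 by (simp add: mult.commute)
  hence "P2 m * s + P1 m \<le> 4" using P1 by linarith
  hence "s * (P2 m * s + P1 m) \<le> s * 4" using s by (intro mult_left_mono) auto
  thus ?thesis using Fh_root[OF Fs] by simp
qed

lemma r_close:
  assumes m: "0 \<le> m" "m \<le> 1" and r: "0 \<le> r" "r \<le> A m" "r \<le> B m"
    and s: "0 < s" "s \<le> 1" and AB: "0 < A m" "A m \<le> 1" "0 < B m" "B m \<le> 1"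
    and Fr: "F m r = 0" and Fs: "Fh m s = 0"
  shows "c1 * c2 * A m * B m * \<bar>r - s\<bar> \<le> m * ME"
proof -
  define K where "K = c1 * c2 / (p * q)"
  have K0: "K > 0" unfolding K_def using c1 c2 p0 q0 by simp
  define T where "T = P2 m * (r + s) + P1 m"
  have FhK: "Fh m S = K * (P2 m * S^2 + P1 m * S + P0 m)" for S by (simp add: Fh_def K_def)
  have id: "Fh m r - Fh m s = K * (r - s) * T" unfolding FhK T_def
    by (simp add: algebra_simps power2_eq_square)
  have P2: "0 \<le> P2 m" using P2_bounds AB by auto
  have pqAB: "0 < p * q * A m * B m" using p0 q0 AB by simp
  have "P2 m * s + P1 m = p * q * A m * B m / s" using Fh_root[OF Fs] s by (simp add: field_simps)
  also have "\<dots> \<ge> p * q * A m * B m" using pqAB s by (simp add: le_divide_eq mult_left_le)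
  finally have "P2 m * s + P1 m \<ge> p * q * A m * B m" .
  moreover have "P2 m * r \<ge> 0" using P2 r by simp
  ultimately have T: "T \<ge> p * q * A m * B m" unfolding T_def by (simp add: algebra_simps)
  have "\<bar>Fh m r\<bar> = K * \<bar>r - s\<bar> * T" using id Fs K0 T pqAB by (simp add: abs_mult)
  also have "\<dots> \<ge> K * \<bar>r - s\<bar> * (p * q * A m * B m)" using T K0 by (intro mult_left_mono) auto
  finally have h1: "K * \<bar>r - s\<bar> * (p * q * A m * B m) \<le> \<bar>Fh m r\<bar>" .
  have "K * \<bar>r - s\<bar> * (p * q * A m * B m) = c1 * c2 * A m * B m * \<bar>r - s\<bar>"
    unfolding K_def using p0 q0 by (simp add: field_simps)
  moreover have "\<bar>Fh m r\<bar> = m * \<bar>Ee m r\<bar>"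
  proof -
    have "Fh m r = - (m * Ee m r)" using Fr F_split[of m r] by simp
    thus ?thesis using m by (simp add: abs_mult)
  qed
  moreover have "m * \<bar>Ee m r\<bar> \<le> m * ME" using Ee_bound[OF m r AB(2,4)] m by (intro mult_left_mono) auto
  ultimately show ?thesis using h1 by linarith
qed

lemma w_lower:
  assumes s: "0 < s" "s < A m" "s < B m" and Fs: "Fh m s = 0"
    and AB: "A m \<le> 1 - \<eta>" "B m \<le> 1 - \<eta>" and eta: "\<eta> > 0"
  shows "3 * \<eta> * q * s \<le> 4 * ((A m - s) + (B m - s))"
proof -
  define u where "u = A m - s"
  define v where "v = B m - s"
  define w where "w = u + v"
  have u0: "u > 0" and v0: "v > 0" using s by (auto simp: u_def v_def)
  have e1: "\<eta> < 1" using AB s eta by linarith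
  have eq: "(1 - s) * (s^2 - u * v) = s * (A m * v / p + B m * u / q)"
  proof -
    have "c1 * c2 * ((1 - s) * (s^2 - u * v) - s * (A m * v / p + B m * u / q)) = 0"
      using Fs Fh_alt[of m s] by (simp add: u_def v_def)
    thus ?thesis using c1 c2 by simp
  qed
  have t1: "A m * v / p \<le> v / q"
  proof -
    have "A m * v / p \<le> 1 * v / p" using AB eta v0 p0 s by (intro divide_right_mono mult_right_mono) auto
    also have "\<dots> \<le> v / q" using v0 q0 qp by (simp add: divide_left_mono)
    finally show ?thesis .
  qed
  have t2: "B m * u / q \<le> u / q" using AB eta u0 q0 s by (simp add: divide_right_mono mult_left_le_one_le)
  have rhs: "s * (A m * v / p + B m * u / q) \<le> s * (w / q)"
    using t1 t2 s by (intro mult_left_mono) (auto simp: w_def add_divide_distrib)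
  show ?thesis
  proof (cases "w \<ge> s")
    case True
    have "\<eta> * q \<le> 1" using e1 eta q0 q1 le1_mult[of q \<eta> 1] by (simp add: mult.commute)
    hence "3 * \<eta> * q * s \<le> 3 * s" using s by (simp add: mult.assoc mult_left_le_one_le)
    moreover have "3 * s \<le> 4 * w" using True s by linarith
    ultimately have "3 * \<eta> * q * s \<le> 4 * w" by (rule order_trans)
    thus ?thesis unfolding w_def u_def v_def .
  next
    case False
    have w0: "0 \<le> w" using u0 v0 by (simp add: w_def)
    have "4 * (u * v) \<le> w^2" unfolding w_def using sum_squares_ge_zero
    proof -
      have "0 \<le> (u - v)^2" by simp
      thus "4 * (u * v) \<le> (u + v)^2" by (simp add: power2_eq_square algebra_simps)
    qed
    moreover have "w^2 \<le> s^2" using False w0 by (simp add: power_mono)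
    ultimately have "u * v \<le> s^2 / 4" by simp
    hence h: "3 * s^2 / 4 \<le> s^2 - u * v" by simp
    have "1 - s \<ge> \<eta>" using s AB by linarith
    hence "\<eta> * (3 * s^2 / 4) \<le> (1 - s) * (s^2 - u * v)"
      using h eta s by (intro mult_mono) auto
    also have "\<dots> \<le> s * (w / q)" using eq rhs by simp
    finally have "\<eta> * (3 * s^2 / 4) \<le> s * (w / q)" .
    hence "s * (3 * \<eta> * q * s) \<le> s * (4 * w)" using q0 by (simp add: field_simps power2_eq_square)
    hence "3 * \<eta> * q * s \<le> 4 * w" using s by simp
    thus ?thesis by (simp add: w_def u_def v_def)
  qed
qed

lemma Qh_lower:
  assumes S: "0 \<le> S" "S \<le> A m" "S \<le> B m"
  shows "c1 * c2 * (S * ((A m - S) + (B m - S))) \<le> Qh m S"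
proof -
  have "S * (B m - S) \<le> A m * (B m - S)" using S by (intro mult_right_mono) auto
  also have "\<dots> \<le> A m * (B m - S) / p"
    using S p0 p1 by (simp add: le_divide_eq mult_left_le)
  finally have 1: "S * (B m - S) \<le> A m * (B m - S) / p" .
  have "S * (A m - S) \<le> B m * (A m - S)" using S by (intro mult_right_mono) auto
  also have "\<dots> \<le> B m * (A m - S) / q"
    using S q0 q1 by (simp add: le_divide_eq mult_left_le)
  finally have 2: "S * (A m - S) \<le> B m * (A m - S) / q" .
  have "S * ((A m - S) + (B m - S)) \<le> A m * (B m - S) / p + B m * (A m - S) / q"
    using 1 2 by (simp add: algebra_simps)
  thus ?thesis unfolding Qh_def using c1 c2 by (intro mult_left_mono) auto
qed

definition QE :: real where "QE = (c1 + c2) / q + 2 * (c1 + c2 + 1) / q"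

lemma qe_bounds:
  assumes m: "0 \<le> m" "m \<le> 1" and S: "0 \<le> S" "S \<le> A m" "S \<le> B m" and AB: "A m \<le> 1" "B m \<le> 1"
  shows "0 \<le> qe m S \<and> qe m S \<le> QE"
proof -
  have S1: "S \<le> 1" using S AB by linarith
  have bs: "0 \<le> B m - S" "B m - S \<le> 1" using S AB by auto
  have as: "0 \<le> A m - S" "A m - S \<le> 1" using S AB by auto
  define T1 where "T1 = ((B m - S) * S) * (c2 / p)"
  define T2 where "T2 = ((A m - S) * S) * (c1 / q)"
  define T3 where "T3 = ((A m - S) * (B m - S)) * ((c1 + c2 + m) * (1/p + 1/q))"
  have e: "qe m S = T1 + T2 + T3" unfolding qe_def T1_def T2_def T3_def using p0 q0 by (simp add: field_simps; algebra?)
  have x1: "0 \<le> (B m - S) * S" "(B m - S) * S \<le> 1" using bs S le1_mult[OF bs S(1) S1] by auto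
  have x2: "0 \<le> (A m - S) * S" "(A m - S) * S \<le> 1" using as S le1_mult[OF as S(1) S1] by auto
  have x3: "0 \<le> (A m - S) * (B m - S)" "(A m - S) * (B m - S) \<le> 1" using as bs le1_mult[OF as bs] by auto
  have T1: "0 \<le> T1" "T1 \<le> c2 / q" unfolding T1_def using x1 c2 p0 apply simp
    using le1_mult[OF x1 _ c2p] c2 p0 by simp
  have T2: "0 \<le> T2" "T2 \<le> c1 / q" unfolding T2_def using x2 c1 q0 apply simp
    using le1_mult[OF x2, of "c1 / q" "c1 / q"] c1 q0 by simp
  have y: "0 \<le> (c1 + c2 + m) * (1/p + 1/q)" using c1 c2 m p0 q0 by simp
  have y2: "(c1 + c2 + m) * (1/p + 1/q) \<le> (c1 + c2 + 1) * (2 / q)"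
    using ip_le_iq c1 c2 m p0 q0 by (intro mult_mono) auto
  have T3: "0 \<le> T3" "T3 \<le> (c1 + c2 + 1) * (2 / q)" unfolding T3_def using x3 y apply simp
    using le1_mult[OF x3 y y2] .
  show ?thesis unfolding e QE_def using T1 T2 T3 by (simp add: add_divide_distrib)
qed

lemma Qh_diff: "Qh m r - Qh m s = - (r - s) * (c1 * c2 * (A m / p + B m / q))"
  unfolding Qh_def by (simp add: algebra_simps diff_divide_distrib)

lemma Qh_coef: "0 < A m \<Longrightarrow> A m \<le> 1 \<Longrightarrow> 0 < B m \<Longrightarrow> B m \<le> 1 \<Longrightarrow> \<bar>c1 * c2 * (A m / p + B m / q)\<bar> \<le> c1 * c2 * (2 / q)"
proof -
  assume a: "0 < A m" "A m \<le> 1" and b: "0 < B m" "B m \<le> 1"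
  have "A m / p \<le> 1 / q" using a ip_le_iq p0 by (smt (verit) divide_right_mono)
  moreover have "B m / q \<le> 1 / q" using b q0 by (simp add: divide_right_mono)
  moreover have "0 \<le> A m / p + B m / q" using a b p0 q0 by simp
  ultimately have "\<bar>A m / p + B m / q\<bar> \<le> 2 / q" by simp
  hence "c1 * c2 * \<bar>A m / p + B m / q\<bar> \<le> c1 * c2 * (2 / q)" using c1 c2 by (intro mult_left_mono) auto
  thus ?thesis using c1 c2 by (simp add: abs_mult)
qed

lemma N1h_lip:
  assumes r: "0 \<le> r" "r \<le> A m" "r \<le> B m" and s: "0 \<le> s" "s \<le> A m" "s \<le> B m"
    and AB: "A m \<le> 1" "B m \<le> 1"
  shows "\<bar>N1h m r - N1h m s\<bar> \<le> (5 * c2 / q) * \<bar>r - s\<bar>"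
proof -
  define z0 where "z0 = c2 * A m / q"
  define z1 where "z1 = c2 * (1 / p - 1 / q)"
  have N: "N1h m S = (1 - S) * (B m - S) * (z0 + z1 * S)" for S
    unfolding N1h_def z0_def z1_def by (simp add: algebra_simps diff_divide_distrib add_divide_distrib)
  have Z: "\<bar>z0 + z1 * r\<bar> \<le> 2 * c2 / q"
  proof -
    have e: "z0 + z1 * r = c2 * (r / p + (A m - r) / q)" unfolding z0_def z1_def
      by (simp add: algebra_simps diff_divide_distrib add_divide_distrib)
    have "r / p \<le> 1 / q" using r AB ip_le_iq p0 by (smt (verit) divide_right_mono)
    moreover have "(A m - r) / q \<le> 1 / q" using r AB q0 by (simp add: divide_right_mono)
    moreover have "0 \<le> r / p + (A m - r) / q" using r p0 q0 by simp
    ultimately have "\<bar>r / p + (A m - r) / q\<bar> \<le> 2 / q" by simp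
    hence "c2 * \<bar>r / p + (A m - r) / q\<bar> \<le> c2 * (2 / q)" using c2 by (intro mult_left_mono) auto
    thus ?thesis unfolding e using c2 by (simp add: abs_mult ac_simps)
  qed
  have Z1: "\<bar>z1\<bar> \<le> c2 / q"
  proof -
    have "0 \<le> 1 / q - 1 / p" using ip_le_iq by simp
    moreover have "1 / q - 1 / p \<le> 1 / q" using p0 by simp
    ultimately have "\<bar>1 / p - 1 / q\<bar> \<le> 1 / q" by simp
    hence "c2 * \<bar>1 / p - 1 / q\<bar> \<le> c2 * (1 / q)" using c2 by (intro mult_left_mono) auto
    thus ?thesis unfolding z1_def using c2 by (simp add: abs_mult)
  qed
  have "\<bar>N1h m r - N1h m s\<bar> \<le> (2 * (2 * c2 / q) + c2 / q) * \<bar>r - s\<bar>"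
    unfolding N using lip3[OF r(1,3) s(1,3) AB(2) Z Z1] .
  thus ?thesis by simp
qed

lemma N2h_lip:
  assumes r: "0 \<le> r" "r \<le> A m" "r \<le> B m" and s: "0 \<le> s" "s \<le> A m" "s \<le> B m"
    and AB: "A m \<le> 1" "B m \<le> 1"
  shows "\<bar>N2h m r - N2h m s\<bar> \<le> (5 * c1 / q) * \<bar>r - s\<bar>"
proof -
  define z0 where "z0 = c1 * B m / p"
  define z1 where "z1 = c1 * (1 / q - 1 / p)"
  have N: "N2h m S = (1 - S) * (A m - S) * (z0 + z1 * S)" for S
    unfolding N2h_def z0_def z1_def by (simp add: algebra_simps diff_divide_distrib add_divide_distrib)
  have Z: "\<bar>z0 + z1 * r\<bar> \<le> 2 * c1 / q"
  proof -
    have e: "z0 + z1 * r = c1 * (r / q + (B m - r) / p)" unfolding z0_def z1_def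
      by (simp add: algebra_simps diff_divide_distrib add_divide_distrib)
    have "(B m - r) / p \<le> 1 / q" using r AB ip_le_iq p0 by (smt (verit) divide_right_mono)
    moreover have "r / q \<le> 1 / q" using r AB q0 by (simp add: divide_right_mono)
    moreover have "0 \<le> r / q + (B m - r) / p" using r p0 q0 by simp
    ultimately have "\<bar>r / q + (B m - r) / p\<bar> \<le> 2 / q" by simp
    hence "c1 * \<bar>r / q + (B m - r) / p\<bar> \<le> c1 * (2 / q)" using c1 by (intro mult_left_mono) auto
    thus ?thesis unfolding e using c1 by (simp add: abs_mult ac_simps)
  qed
  have Z1: "\<bar>z1\<bar> \<le> c1 / q"
  proof -
    have "0 \<le> 1 / q - 1 / p" using ip_le_iq by simp
    moreover have "1 / q - 1 / p \<le> 1 / q" using p0 by simp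
    ultimately have "\<bar>1 / q - 1 / p\<bar> \<le> 1 / q" by simp
    hence "c1 * \<bar>1 / q - 1 / p\<bar> \<le> c1 * (1 / q)" using c1 by (intro mult_left_mono) auto
    thus ?thesis unfolding z1_def using c1 by (simp add: abs_mult)
  qed
  have "\<bar>N2h m r - N2h m s\<bar> \<le> (2 * (2 * c1 / q) + c1 / q) * \<bar>r - s\<bar>"
    unfolding N using lip3[OF r(1,2) s(1,2) AB(1) Z Z1] .
  thus ?thesis by simp
qed

lemma N1h_bound:
  assumes S: "0 \<le> S" "S \<le> A m" "S \<le> B m" and AB: "A m \<le> 1" "B m \<le> 1"
  shows "0 \<le> N1h m S \<and> N1h m S \<le> 2 * c2 / q"
proof -
  have z0: "0 \<le> c2 * (S / p + (A m - S) / q)" using S c2 p0 q0 by simp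
  have "S / p \<le> 1 / q" using S AB ip_le_iq p0 by (smt (verit) divide_right_mono)
  moreover have "(A m - S) / q \<le> 1 / q" using S AB q0 by (simp add: divide_right_mono)
  ultimately have "S / p + (A m - S) / q \<le> 2 / q" by simp
  hence z1': "c2 * (S / p + (A m - S) / q) \<le> c2 * (2 / q)" using c2 by (intro mult_left_mono) auto
  have e2: "c2 * (2 / q) = 2 * c2 / q" by simp
  note z1 = z1'[unfolded e2]
  have x: "0 \<le> (1 - S) * (B m - S)" "(1 - S) * (B m - S) \<le> 1" using S AB le1_mult[of "1 - S" "B m - S" 1] by auto
  show ?thesis unfolding N1h_def using le1_mult[OF x z0 z1] x z0 by simp
qed

lemma N2h_bound:
  assumes S: "0 \<le> S" "S \<le> A m" "S \<le> B m" and AB: "A m \<le> 1" "B m \<le> 1"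
  shows "0 \<le> N2h m S \<and> N2h m S \<le> 2 * c1 / q"
proof -
  have z0: "0 \<le> c1 * (S / q + (B m - S) / p)" using S c1 p0 q0 by simp
  have "(B m - S) / p \<le> 1 / q" using S AB ip_le_iq p0 by (smt (verit) divide_right_mono)
  moreover have "S / q \<le> 1 / q" using S AB q0 by (simp add: divide_right_mono)
  ultimately have "S / q + (B m - S) / p \<le> 2 / q" by simp
  hence z1': "c1 * (S / q + (B m - S) / p) \<le> c1 * (2 / q)" using c1 by (intro mult_left_mono) auto
  have e2: "c1 * (2 / q) = 2 * c1 / q" by simp
  note z1 = z1'[unfolded e2]
  have x: "0 \<le> (1 - S) * (A m - S)" "(1 - S) * (A m - S) \<le> 1" using S AB le1_mult[of "1 - S" "A m - S" 1] by auto
  show ?thesis unfolding N2h_def using le1_mult[OF x z0 z1] x z0 by simp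
qed

lemma abs_mxle: "0 \<le> (m::real) \<Longrightarrow> 0 \<le> x \<Longrightarrow> x \<le> X \<Longrightarrow> \<bar>m * x\<bar> \<le> m * X"
  by (simp add: abs_mult mult_left_mono)

lemma cube_box: "0 \<le> x \<Longrightarrow> x \<le> 1 \<Longrightarrow> 0 \<le> y \<Longrightarrow> y \<le> 1 \<Longrightarrow> 0 \<le> z \<Longrightarrow> z \<le> 1 \<Longrightarrow> 0 \<le> x * y * z \<and> x * y * z \<le> (1::real)"
  using le1_mult[of x y 1] le1_mult[of "x * y" z 1] by simp

lemma I_common:
  assumes m: "0 \<le> m" "m \<le> 1" and AB: "0 < A m" "A m \<le> 1" "0 < B m" "B m \<le> 1"
    and r: "0 < r" "r < A m" "r < B m" and s: "0 < s" "s < A m" "s < B m"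
    and rl: "rl \<le> r" "0 < rl" and wl: "wl \<le> (A m - r) + (B m - r)" "0 < wl"
    and sl: "sl \<le> s" "0 < sl" and wl2: "wl2 \<le> (A m - s) + (B m - s)" "0 < wl2"
    and dlt: "\<bar>r - s\<bar> \<le> \<delta>"
  shows "Q m r \<ge> c1 * c2 * (rl * wl)" "Qh m s \<ge> c1 * c2 * (sl * wl2)"
    "\<bar>Q m r - Qh m s\<bar> \<le> c1 * c2 * (2 / q) * \<delta> + m * QE"
proof -
  have rr: "0 \<le> r" "r \<le> A m" "r \<le> B m" using r by auto
  have ss: "0 \<le> s" "s \<le> A m" "s \<le> B m" using s by auto
  have qe: "0 \<le> qe m r" "qe m r \<le> QE" using qe_bounds[OF m rr AB(2,4)] by auto
  have "c1 * c2 * (rl * wl) \<le> c1 * c2 * (r * ((A m - r) + (B m - r)))"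
    using rl wl c1 c2 by (intro mult_left_mono mult_mono) auto
  also have "\<dots> \<le> Qh m r" using Qh_lower[OF rr] .
  also have "\<dots> \<le> Q m r" unfolding Q_split using qe m by simp
  finally show "Q m r \<ge> c1 * c2 * (rl * wl)" .
  have "c1 * c2 * (sl * wl2) \<le> c1 * c2 * (s * ((A m - s) + (B m - s)))"
    using sl wl2 c1 c2 by (intro mult_left_mono mult_mono) auto
  also have "\<dots> \<le> Qh m s" using Qh_lower[OF ss] .
  finally show "Qh m s \<ge> c1 * c2 * (sl * wl2)" .
  have "Q m r - Qh m s = (Qh m r - Qh m s) + m * qe m r" unfolding Q_split by simp
  also have "\<dots> = - (r - s) * (c1 * c2 * (A m / p + B m / q)) + m * qe m r" unfolding Qh_diff ..
  finally have e: "Q m r - Qh m s = - (r - s) * (c1 * c2 * (A m / p + B m / q)) + m * qe m r" .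
  have d0: "0 \<le> \<delta>" using dlt abs_ge_zero[of "r - s"] by linarith
  have cq: "0 \<le> c1 * c2 * (2 / q)" using c1 c2 q0 by simp
  have h0: "\<bar>c1 * c2 * (A m / p + B m / q)\<bar> * \<bar>r - s\<bar> \<le> c1 * c2 * (2 / q) * \<delta>"
    using mult_mono[OF Qh_coef[OF AB] dlt cq abs_ge_zero] .
  have "\<bar>- (r - s) * (c1 * c2 * (A m / p + B m / q))\<bar> = \<bar>c1 * c2 * (A m / p + B m / q)\<bar> * \<bar>r - s\<bar>"
    by (simp add: abs_mult mult.commute abs_minus_commute)
  with h0 have h1: "\<bar>- (r - s) * (c1 * c2 * (A m / p + B m / q))\<bar> \<le> c1 * c2 * (2 / q) * \<delta>" by simp
  have h2: "\<bar>m * qe m r\<bar> \<le> m * QE" using abs_mxle[OF m(1) qe] .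
  show "\<bar>Q m r - Qh m s\<bar> \<le> c1 * c2 * (2 / q) * \<delta> + m * QE"
    unfolding e by (rule order_trans[OF abs_triangle_ineq add_mono[OF h1 h2]])
qed

lemma I1_bound:
  assumes m: "0 \<le> m" "m \<le> 1" and AB: "0 < A m" "A m \<le> 1" "0 < B m" "B m \<le> 1"
    and r: "0 < r" "r < A m" "r < B m" and s: "0 < s" "s < A m" "s < B m" and Fs: "Fh m s = 0"
    and rl: "rl \<le> r" "0 < rl" and wl: "wl \<le> (A m - r) + (B m - r)" "0 < wl"
    and sl: "sl \<le> s" "0 < sl" and wl2: "wl2 \<le> (A m - s) + (B m - s)" "0 < wl2"
    and dlt: "\<bar>r - s\<bar> \<le> \<delta>"
  shows "\<bar>(1 - r) * Xa m r / Q m r - (s + p * (1 - s)) / (c1 * p) * (1 - 1 / B m * s)\<bar>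
     \<le> (5 * c2 / q * \<delta> + m * (1 / q)) / (c1 * c2 * (rl * wl))
       + 2 * c2 / q * (c1 * c2 * (2 / q) * \<delta> + m * QE) / (c1 * c2 * (rl * wl) * (c1 * c2 * (sl * wl2)))"
proof -
  note C = I_common[OF m AB r s rl wl sl wl2 dlt]
  have rr: "0 \<le> r" "r \<le> A m" "r \<le> B m" using r by auto
  have ss: "0 \<le> s" "s \<le> A m" "s \<le> B m" using s by auto
  have d1: "0 < c1 * c2 * (rl * wl)" using c1 c2 rl wl by simp
  have d2: "0 < c1 * c2 * (sl * wl2)" using c1 c2 sl wl2 by simp
  have Qs: "Qh m s > 0" using C(2) d2 by linarith
  have bv: "(s + p * (1 - s)) / (c1 * p) * (1 - 1 / B m * s) = N1h m s / Qh m s"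
  proof -
    have "N1h m s * (c1 * p * B m) = (s + p * (1 - s)) * (B m - s) * Qh m s"
      using b1_id[of m s] Fs by simp
    thus ?thesis using Qs AB c1 p0 by (simp add: field_simps)
  qed
  have n1: "0 \<le> (1 - r) * (B m - r) * (A m - r) \<and> (1 - r) * (B m - r) * (A m - r) \<le> 1"
    using r AB by (intro cube_box) auto
  have "\<bar>(1 - r) * Xa m r - N1h m s\<bar> = \<bar>(N1h m r - N1h m s) + m * ((1 - r) * (B m - r) * (A m - r) / q)\<bar>"
    unfolding N1_split by simp
  also have "\<dots> \<le> 5 * c2 / q * \<delta> + m * (1 / q)"
  proof -
    have "\<bar>N1h m r - N1h m s\<bar> \<le> 5 * c2 / q * \<delta>"
      using N1h_lip[OF rr ss AB(2,4)] dlt c2 q0 by (smt (verit) mult_left_mono divide_nonneg_pos)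
    moreover have "\<bar>m * ((1 - r) * (B m - r) * (A m - r) / q)\<bar> \<le> m * (1 / q)"
      using abs_mxle[OF m(1), of "(1 - r) * (B m - r) * (A m - r) / q" "1 / q"] n1 q0
      by (simp add: divide_right_mono)
    ultimately show ?thesis by (rule order_trans[OF abs_triangle_ineq add_mono])
  qed
  finally have a: "\<bar>(1 - r) * Xa m r - N1h m s\<bar> \<le> 5 * c2 / q * \<delta> + m * (1 / q)" .
  have n: "\<bar>N1h m s\<bar> \<le> 2 * c2 / q" using N1h_bound[OF ss AB(2,4)] by simp
  show ?thesis unfolding bv using ratio_bound[OF C(1) d1 C(2) d2 a C(3) n] .
qed

lemma I2_bound:
  assumes m: "0 \<le> m" "m \<le> 1" and AB: "0 < A m" "A m \<le> 1" "0 < B m" "B m \<le> 1"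
    and r: "0 < r" "r < A m" "r < B m" and s: "0 < s" "s < A m" "s < B m" and Fs: "Fh m s = 0"
    and rl: "rl \<le> r" "0 < rl" and wl: "wl \<le> (A m - r) + (B m - r)" "0 < wl"
    and sl: "sl \<le> s" "0 < sl" and wl2: "wl2 \<le> (A m - s) + (B m - s)" "0 < wl2"
    and dlt: "\<bar>r - s\<bar> \<le> \<delta>"
  shows "\<bar>(1 - r) * Xb m r / Q m r - (s + q * (1 - s)) / (c2 * q) * (1 - 1 / A m * s)\<bar>
     \<le> (5 * c1 / q * \<delta> + m * (1 / q)) / (c1 * c2 * (rl * wl))
       + 2 * c1 / q * (c1 * c2 * (2 / q) * \<delta> + m * QE) / (c1 * c2 * (rl * wl) * (c1 * c2 * (sl * wl2)))"
proof -
  note C = I_common[OF m AB r s rl wl sl wl2 dlt]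
  have rr: "0 \<le> r" "r \<le> A m" "r \<le> B m" using r by auto
  have ss: "0 \<le> s" "s \<le> A m" "s \<le> B m" using s by auto
  have d1: "0 < c1 * c2 * (rl * wl)" using c1 c2 rl wl by simp
  have d2: "0 < c1 * c2 * (sl * wl2)" using c1 c2 sl wl2 by simp
  have Qs: "Qh m s > 0" using C(2) d2 by linarith
  have bv: "(s + q * (1 - s)) / (c2 * q) * (1 - 1 / A m * s) = N2h m s / Qh m s"
  proof -
    have "N2h m s * (c2 * q * A m) = (s + q * (1 - s)) * (A m - s) * Qh m s"
      using b2_id[of m s] Fs by simp
    thus ?thesis using Qs AB c2 q0 by (simp add: field_simps)
  qed
  have n1: "0 \<le> (1 - r) * (A m - r) * (B m - r) \<and> (1 - r) * (A m - r) * (B m - r) \<le> 1"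
    using r AB by (intro cube_box) auto
  have "\<bar>(1 - r) * Xb m r - N2h m s\<bar> = \<bar>(N2h m r - N2h m s) + m * ((1 - r) * (A m - r) * (B m - r) / p)\<bar>"
    unfolding N2_split by simp
  also have "\<dots> \<le> 5 * c1 / q * \<delta> + m * (1 / q)"
  proof -
    have "\<bar>N2h m r - N2h m s\<bar> \<le> 5 * c1 / q * \<delta>"
      using N2h_lip[OF rr ss AB(2,4)] dlt c1 q0 by (smt (verit) mult_left_mono divide_nonneg_pos)
    moreover have "\<bar>m * ((1 - r) * (A m - r) * (B m - r) / p)\<bar> \<le> m * (1 / q)"
    proof -
      have "(1 - r) * (A m - r) * (B m - r) / p \<le> 1 / p" using n1 p0 by (simp add: divide_right_mono)
      also have "\<dots> \<le> 1 / q" by (rule ip_le_iq)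
      finally have "(1 - r) * (A m - r) * (B m - r) / p \<le> 1 / q" .
      moreover have "0 \<le> (1 - r) * (A m - r) * (B m - r) / p" using n1 p0 by simp
      ultimately show ?thesis using abs_mxle[OF m(1)] by blast
    qed
    ultimately show ?thesis by (rule order_trans[OF abs_triangle_ineq add_mono])
  qed
  finally have a: "\<bar>(1 - r) * Xb m r - N2h m s\<bar> \<le> 5 * c1 / q * \<delta> + m * (1 / q)" .
  have n: "\<bar>N2h m s\<bar> \<le> 2 * c1 / q" using N2h_bound[OF ss AB(2,4)] by simp
  show ?thesis unfolding bv using ratio_bound[OF C(1) d1 C(2) d2 a C(3) n] .
qed

end


lemma the_pos_root:
  fixes a b c s :: real
  assumes a: "a \<ge> 0" and c: "c < 0" and s: "s > 0" and r: "a * s^2 + b * s + c = 0"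
  shows "(THE s. s > 0 \<and> a * s^2 + b * s + c = 0) = s"
proof (rule the_equality)
  show "s > 0 \<and> a * s^2 + b * s + c = 0" using s r by simp
next
  fix t assume t: "t > 0 \<and> a * t^2 + b * t + c = 0"
  show "t = s"
  proof (rule ccontr)
    assume ne: "t \<noteq> s"
    have "(t - s) * (a * (t + s) + b) = 0" using t r by (simp add: algebra_simps power2_eq_square)
    hence b: "b = - a * (t + s)" using ne by simp
    have "c = a * s * t" using r unfolding b by (simp add: algebra_simps power2_eq_square)
    moreover have "a * s * t \<ge> 0" using a s t by simp
    ultimately show False using c by simp
  qed
qed

context epi begin

lemma Fh_ps:
  assumes "m \<ge> 0"
  shows "Fh m S = c1 * c2 / (p * q) * (A m * B m) *
    (ps_a p q (1 / A m) (1 / B m) * S^2 + ps_b p q (1 / A m) (1 / B m) * S + ps_c p q)"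
proof -
  have a: "A m > 0" and b: "B m > 0" using A_pos B_pos assms by auto
  show ?thesis unfolding Fh_def P2_def P1_def P0_def ps_a_def ps_b_def ps_c_def
    using a b p0 q0 by (simp add: field_simps; algebra?)
qed

lemma ps_a_nonneg: "m \<ge> 0 \<Longrightarrow> ps_a p q (1 / A m) (1 / B m) \<ge> 0"
  unfolding ps_a_def using A_pos[of m] B_pos[of m] p0 q0 p1 q1 by simp

lemma s0_eq:
  assumes m: "m \<ge> 0" and s: "s > 0" and Fs: "Fh m s = 0"
  shows "s0 p q (1 / A m) (1 / B m) = s"
proof -
  have a: "A m > 0" and b: "B m > 0" using A_pos B_pos m by auto
  have K: "c1 * c2 / (p * q) * (A m * B m) \<noteq> 0" using a b c1 c2 p0 q0 by simp
  have r: "ps_a p q (1 / A m) (1 / B m) * s^2 + ps_b p q (1 / A m) (1 / B m) * s + ps_c p q = 0"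
    using Fs Fh_ps[OF m, of s] K by simp
  have c: "ps_c p q < 0" unfolding ps_c_def using p0 q0 by simp
  show ?thesis unfolding s0_def using the_pos_root[OF ps_a_nonneg[OF m] c s r] .
qed

lemma Fh_at_A: "Fh m (A m) = c1 * c2 * (A m)^2 * ((1 - A m) - (B m - A m) / p)"
  unfolding Fh_alt by (simp add: algebra_simps power2_eq_square)

lemma Fh_at_B: "Fh m (B m) = c1 * c2 * (B m)^2 * ((1 - B m) - (A m - B m) / q)"
  unfolding Fh_alt by (simp add: algebra_simps power2_eq_square)

lemma Fh_mono_from_root:
  assumes s: "s > 0" and Fs: "Fh m s = 0" and S: "S \<ge> 0" and AB: "A m > 0" "B m > 0"
    and FS: "Fh m S > 0"
  shows "s < S"
proof -
  define K where "K = c1 * c2 / (p * q)"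
  have K0: "K > 0" unfolding K_def using c1 c2 p0 q0 by simp
  have FhK: "Fh m x = K * (P2 m * x^2 + P1 m * x + P0 m)" for x by (simp add: Fh_def K_def)
  have id: "Fh m S - Fh m s = K * (S - s) * (P2 m * (S + s) + P1 m)" unfolding FhK
    by (simp add: algebra_simps power2_eq_square)
  have P2: "P2 m \<ge> 0" unfolding P2_def using AB p0 q0 p1 q1 by simp
  have "P2 m * s + P1 m = p * q * A m * B m / s" using Fh_root[OF Fs] s by (simp add: field_simps)
  moreover have "p * q * A m * B m / s > 0" using p0 q0 AB s by simp
  moreover have "P2 m * S \<ge> 0" using P2 S by simp
  ultimately have T: "P2 m * (S + s) + P1 m > 0" by (simp add: algebra_simps)
  have "K * (S - s) * (P2 m * (S + s) + P1 m) > 0" using id FS Fs by simp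
  hence "(S - s) * (K * (P2 m * (S + s) + P1 m)) > 0" by (simp add: algebra_simps)
  moreover have "K * (P2 m * (S + s) + P1 m) > 0" using K0 T by simp
  ultimately have "S - s > 0" by (simp add: zero_less_mult_iff)
  thus ?thesis by simp
qed

lemma s0_props:
  assumes m: "m \<ge> 0" and A1: "A m < 1" and B1: "B m < 1" and FA: "F m (A m) > 0" and FB: "F m (B m) > 0"
  shows "0 < s0 p q (1 / A m) (1 / B m) \<and> s0 p q (1 / A m) (1 / B m) < A m \<and>
         s0 p q (1 / A m) (1 / B m) < B m \<and> Fh m (s0 p q (1 / A m) (1 / B m)) = 0"
proof -
  have a: "A m > 0" and b: "B m > 0" using A_pos B_pos m by auto
  have hA: "(1 - A m) * c1 - (c1 + m) * (B m - A m) / p > 0"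
  proof -
    have "c2 * (A m)^2 > 0" using c2 a by simp
    moreover have "0 < c2 * (A m)^2 * ((1 - A m) * c1 - (c1 + m) * (B m - A m) / p)" using FA unfolding F_at_A .
    ultimately show ?thesis by (metis zero_less_mult_pos)
  qed
  have hB: "(1 - B m) * c2 - (c2 + m) * (A m - B m) / q > 0"
  proof -
    have "c1 * (B m)^2 > 0" using c1 b by simp
    moreover have "0 < c1 * (B m)^2 * ((1 - B m) * c2 - (c2 + m) * (A m - B m) / q)" using FB unfolding F_at_B .
    ultimately show ?thesis by (metis zero_less_mult_pos)
  qed
  have gA: "(1 - A m) - (B m - A m) / p > 0"
  proof (cases "B m \<le> A m")
    case True
    hence "(B m - A m) / p \<le> 0" using p0 by (simp add: divide_nonpos_pos)
    thus ?thesis using A1 by linarith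
  next
    case False
    hence "c1 * ((B m - A m) / p) \<le> (c1 + m) * ((B m - A m) / p)" using m p0 by (intro mult_right_mono) auto
    hence "c1 * ((1 - A m) - (B m - A m) / p) > 0" using hA by (simp add: algebra_simps)
    thus ?thesis using c1 by (simp add: zero_less_mult_iff)
  qed
  have gB: "(1 - B m) - (A m - B m) / q > 0"
  proof (cases "A m \<le> B m")
    case True
    hence "(A m - B m) / q \<le> 0" using q0 by (simp add: divide_nonpos_pos)
    thus ?thesis using B1 by linarith
  next
    case False
    hence "c2 * ((A m - B m) / q) \<le> (c2 + m) * ((A m - B m) / q)" using m q0 by (intro mult_right_mono) auto
    hence "c2 * ((1 - B m) - (A m - B m) / q) > 0" using hB by (simp add: algebra_simps)
    thus ?thesis using c2 by (simp add: zero_less_mult_iff)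
  qed
  have FhA: "Fh m (A m) > 0" unfolding Fh_at_A using gA c1 c2 a by simp
  have FhB: "Fh m (B m) > 0" unfolding Fh_at_B using gB c1 c2 b by simp
  have Fh0: "Fh m 0 < 0" unfolding Fh_def P0_def using c1 c2 p0 q0 a b by (simp add: mult_pos_neg)
  have "\<forall>x. 0 \<le> x \<and> x \<le> A m \<longrightarrow> isCont (Fh m) x" unfolding Fh_def[abs_def] by (intro allI impI continuous_intros)
  then obtain s where s: "0 \<le> s" "s \<le> A m" "Fh m s = 0" using IVT[of "Fh m" 0 0 "A m"] Fh0 FhA a by auto
  have s0: "s > 0" using s Fh0 by (metis order_le_less less_irrefl)
  have sA: "s < A m" using Fh_mono_from_root[OF s0 s(3) _ a b FhA] a by simp
  have sB: "s < B m" using Fh_mono_from_root[OF s0 s(3) _ a b FhB] b by simp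
  have "s0 p q (1 / A m) (1 / B m) = s" using s0_eq[OF m s0 s(3)] .
  thus ?thesis using s0 sA sB s by simp
qed

end

context epi begin

lemma AB_mono: "m \<ge> 0 \<Longrightarrow> c1 / b1 \<le> A m \<and> c2 / b2 \<le> B m"
  unfolding A_def B_def using b1 b2 by (simp add: divide_right_mono)

lemma lin_m: "(a * (CS * m) + m * b) / d1 + e * (f * (CS * m) + m * g) / D = ((a * CS + b) / d1 + e * (f * CS + g) / D) * (m::real)"
  by (cases "d1 = 0"; cases "D = 0"; simp add: field_simps)

lemma mfac: "(m::real) * x * y / z - m * w = m * (x * y / z - w)"
  by (cases "z = 0") (simp_all add: field_simps)

lemma asym:
  assumes A0: "c1 / b1 < 1" and B0: "c2 / b2 < 1"
  shows "\<exists>\<mu>2>0. \<exists>C. \<forall>m r. 0 < m \<and> m < \<mu>2 \<and> A m < 1 \<and> B m < 1 \<and> F m (A m) > 0 \<and> F m (B m) > 0 \<and>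
     0 < r \<and> r < A m \<and> r < B m \<and> F m r = 0 \<longrightarrow>
     (let s = s0 p q (1 / A m) (1 / B m) in
       \<bar>r - s\<bar> \<le> C * m \<and>
       \<bar>m * (1 - r) * Xa m r / Q m r - m * ((s + p * (1 - s)) / (c1 * p) * (1 - 1 / B m * s))\<bar> \<le> C * m^2 \<and>
       \<bar>m * (1 - r) * Xb m r / Q m r - m * ((s + q * (1 - s)) / (c2 * q) * (1 - 1 / A m * s))\<bar> \<le> C * m^2)"
proof -
  define a0 where "a0 = c1 / b1"
  define e0 where "e0 = c2 / b2"
  have a00: "a0 > 0" "a0 < 1" using A0 c1 b1 by (auto simp: a0_def)
  have e00: "e0 > 0" "e0 < 1" using B0 c2 b2 by (auto simp: e0_def)
  define \<eta> where "\<eta> = (1 - max a0 e0) / 2"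
  have eta: "\<eta> > 0" using a00 e00 by (simp add: \<eta>_def)
  have ME0: "ME > 0" unfolding ME_def using c1 c2 q0 by (simp add: add_pos_pos)
  define CS where "CS = ME / (c1 * c2 * a0 * e0)"
  have CS0: "CS > 0" unfolding CS_def using ME0 c1 c2 a00 e00 by simp
  define sl where "sl = p * q * a0 * e0 / 4"
  have sl0: "sl > 0" unfolding sl_def using p0 q0 a00 e00 by simp
  define wl2 where "wl2 = 3 * \<eta> * q * sl / 4"
  have wl20: "wl2 > 0" unfolding wl2_def using eta q0 sl0 by simp
  define rl where "rl = sl / 2"
  define wl where "wl = wl2 / 2"
  have rl0: "rl > 0" and wl0: "wl > 0" using sl0 wl20 by (auto simp: rl_def wl_def)
  define d1 where "d1 = c1 * c2 * (rl * wl)"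
  define d2 where "d2 = c1 * c2 * (sl * wl2)"
  define K1 where "K1 = (5 * c2 / q * CS + 1 / q) / d1 + 2 * c2 / q * (c1 * c2 * (2 / q) * CS + QE) / (d1 * d2)"
  define K2 where "K2 = (5 * c1 / q * CS + 1 / q) / d1 + 2 * c1 / q * (c1 * c2 * (2 / q) * CS + QE) / (d1 * d2)"
  define C where "C = max CS (max K1 K2)"
  define \<mu>2 where "\<mu>2 = min 1 (min (\<eta> * min b1 b2) (min (sl / (2 * CS)) (wl2 / (4 * CS))))"
  have mu20: "\<mu>2 > 0" unfolding \<mu>2_def using eta b1 b2 sl0 wl20 CS0 by simp
  show ?thesis
  proof (rule exI[of _ \<mu>2], rule conjI[OF mu20], rule exI[of _ C], intro allI impI)
    fix m r
    assume H: "0 < m \<and> m < \<mu>2 \<and> A m < 1 \<and> B m < 1 \<and> F m (A m) > 0 \<and> F m (B m) > 0 \<and>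
     0 < r \<and> r < A m \<and> r < B m \<and> F m r = 0"
    have m: "0 < m" "m \<le> 1" using H by (auto simp: \<mu>2_def)
    have m0: "0 \<le> m" using m by simp
    have mlt: "m \<le> \<eta> * min b1 b2" "m \<le> sl / (2 * CS)" "m \<le> wl2 / (4 * CS)" using H by (auto simp: \<mu>2_def)
    have Alow: "a0 \<le> A m" and Blow: "e0 \<le> B m" using AB_mono[OF m0] by (auto simp: a0_def e0_def)
    have Aup: "A m \<le> 1 - \<eta>"
    proof -
      have "m / b1 \<le> \<eta>" using mlt(1) b1 by (simp add: divide_le_eq mult.commute) (smt (verit) min.cobounded1 mult_left_mono eta)
      moreover have "A m = a0 + m / b1" unfolding A_def a0_def by (simp add: add_divide_distrib)
      moreover have "a0 \<le> 1 - 2 * \<eta>" unfolding \<eta>_def by (simp add: field_simps)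
      ultimately show ?thesis by linarith
    qed
    have Bup: "B m \<le> 1 - \<eta>"
    proof -
      have "m / b2 \<le> \<eta>" using mlt(1) b2 by (simp add: divide_le_eq mult.commute) (smt (verit) min.cobounded2 mult_left_mono eta)
      moreover have "B m = e0 + m / b2" unfolding B_def e0_def by (simp add: add_divide_distrib)
      moreover have "e0 \<le> 1 - 2 * \<eta>" unfolding \<eta>_def by (simp add: field_simps)
      ultimately show ?thesis by linarith
    qed
    have AB: "0 < A m" "A m \<le> 1" "0 < B m" "B m \<le> 1" using A_pos B_pos m0 Aup Bup eta by auto
    define s where "s = s0 p q (1 / A m) (1 / B m)"
    have sp: "0 < s" "s < A m" "s < B m" "Fh m s = 0"
      using s0_props[OF m0] H unfolding s_def by auto
    have r: "0 < r" "r < A m" "r < B m" "F m r = 0" using H by auto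
    have s1: "s \<le> 1" using sp AB by linarith
    have rc: "c1 * c2 * A m * B m * \<bar>r - s\<bar> \<le> m * ME"
      using r_close[OF m0 m(2) _ _ _ sp(1) s1 AB r(4) sp(4)] r by auto
    have ABl: "c1 * c2 * a0 * e0 \<le> c1 * c2 * A m * B m"
      using Alow Blow a00 e00 c1 c2 by (intro mult_left_mono mult_mono) auto
    have dS: "\<bar>r - s\<bar> \<le> CS * m"
    proof -
      have "c1 * c2 * a0 * e0 * \<bar>r - s\<bar> \<le> m * ME" using ABl rc
        by (meson abs_ge_zero mult_right_mono order_trans)
      thus ?thesis unfolding CS_def using c1 c2 a00 e00 by (simp add: field_simps)
    qed
    have sls: "sl \<le> s"
    proof -
      have "p * q * A m * B m \<le> 4 * s" using s_lower[OF sp(1) s1 sp(4) AB] .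
      moreover have "p * q * a0 * e0 \<le> p * q * A m * B m"
        using Alow Blow a00 e00 p0 q0 by (intro mult_left_mono mult_mono) auto
      ultimately show ?thesis unfolding sl_def by simp
    qed
    have wls: "wl2 \<le> (A m - s) + (B m - s)"
    proof -
      have "3 * \<eta> * q * s \<le> 4 * ((A m - s) + (B m - s))" using w_lower[OF sp(1,2,3,4) Aup Bup eta] .
      moreover have "3 * \<eta> * q * sl \<le> 3 * \<eta> * q * s" using sls eta q0 by simp
      ultimately show ?thesis unfolding wl2_def by simp
    qed
    have CSm1: "CS * m \<le> sl / 2" using mlt(2) CS0 by (simp add: field_simps)
    have CSm2: "CS * m \<le> wl2 / 4" using mlt(3) CS0 by (simp add: field_simps)
    have rls: "rl \<le> r" unfolding rl_def using dS CSm1 sls by (simp add: abs_le_iff) 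
    have wlr: "wl \<le> (A m - r) + (B m - r)" unfolding wl_def using dS CSm2 wls by (simp add: abs_le_iff)
    have b1b: "\<bar>(1 - r) * Xa m r / Q m r - (s + p * (1 - s)) / (c1 * p) * (1 - 1 / B m * s)\<bar> \<le> K1 * m"
    proof -
      have "\<bar>(1 - r) * Xa m r / Q m r - (s + p * (1 - s)) / (c1 * p) * (1 - 1 / B m * s)\<bar>
         \<le> (5 * c2 / q * (CS * m) + m * (1 / q)) / (c1 * c2 * (rl * wl))
       + 2 * c2 / q * (c1 * c2 * (2 / q) * (CS * m) + m * QE) / (c1 * c2 * (rl * wl) * (c1 * c2 * (sl * wl2)))"
        using I1_bound[OF m0 m(2) AB r(1,2,3) sp rls rl0 wlr wl0 sls sl0 wls wl20 dS] .
      also have "\<dots> = K1 * m" unfolding K1_def d1_def[symmetric] d2_def[symmetric] by (rule lin_m)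
      finally show ?thesis .
    qed
    have b2b: "\<bar>(1 - r) * Xb m r / Q m r - (s + q * (1 - s)) / (c2 * q) * (1 - 1 / A m * s)\<bar> \<le> K2 * m"
    proof -
      have "\<bar>(1 - r) * Xb m r / Q m r - (s + q * (1 - s)) / (c2 * q) * (1 - 1 / A m * s)\<bar>
         \<le> (5 * c1 / q * (CS * m) + m * (1 / q)) / (c1 * c2 * (rl * wl))
       + 2 * c1 / q * (c1 * c2 * (2 / q) * (CS * m) + m * QE) / (c1 * c2 * (rl * wl) * (c1 * c2 * (sl * wl2)))"
        using I2_bound[OF m0 m(2) AB r(1,2,3) sp rls rl0 wlr wl0 sls sl0 wls wl20 dS] .
      also have "\<dots> = K2 * m" unfolding K2_def d1_def[symmetric] d2_def[symmetric] by (rule lin_m)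
      finally show ?thesis .
    qed
    have g1: "\<bar>m * (1 - r) * Xa m r / Q m r - m * ((s + p * (1 - s)) / (c1 * p) * (1 - 1 / B m * s))\<bar> \<le> C * m^2"
    proof -
      have "\<bar>m * (1 - r) * Xa m r / Q m r - m * ((s + p * (1 - s)) / (c1 * p) * (1 - 1 / B m * s))\<bar>
        = m * \<bar>(1 - r) * Xa m r / Q m r - (s + p * (1 - s)) / (c1 * p) * (1 - 1 / B m * s)\<bar>"
        unfolding mfac abs_mult using m0 by simp
      also have "\<dots> \<le> m * (K1 * m)" using b1b m0 by (rule mult_left_mono)
      also have "\<dots> \<le> m * (C * m)" using m0 unfolding C_def by (intro mult_left_mono mult_right_mono) auto
      finally show ?thesis by (simp add: power2_eq_square mult_ac)
    qed
    have g2: "\<bar>m * (1 - r) * Xb m r / Q m r - m * ((s + q * (1 - s)) / (c2 * q) * (1 - 1 / A m * s))\<bar> \<le> C * m^2"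
    proof -
      have "\<bar>m * (1 - r) * Xb m r / Q m r - m * ((s + q * (1 - s)) / (c2 * q) * (1 - 1 / A m * s))\<bar>
        = m * \<bar>(1 - r) * Xb m r / Q m r - (s + q * (1 - s)) / (c2 * q) * (1 - 1 / A m * s)\<bar>"
        unfolding mfac abs_mult using m0 by simp
      also have "\<dots> \<le> m * (K2 * m)" using b2b m0 by (rule mult_left_mono)
      also have "\<dots> \<le> m * (C * m)" using m0 unfolding C_def by (intro mult_left_mono mult_right_mono) auto
      finally show ?thesis by (simp add: power2_eq_square mult_ac)
    qed
    have g0: "\<bar>r - s\<bar> \<le> C * m"
    proof -
      have "CS * m \<le> C * m" using m0 unfolding C_def by (intro mult_right_mono) auto
      thus ?thesis using dS by linarith
    qed
    show "let s = s0 p q (1 / A m) (1 / B m) in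
       \<bar>r - s\<bar> \<le> C * m \<and>
       \<bar>m * (1 - r) * Xa m r / Q m r - m * ((s + p * (1 - s)) / (c1 * p) * (1 - 1 / B m * s))\<bar> \<le> C * m^2 \<and>
       \<bar>m * (1 - r) * Xb m r / Q m r - m * ((s + q * (1 - s)) / (c2 * q) * (1 - 1 / A m * s))\<bar> \<le> C * m^2"
      using g0 g1 g2 unfolding s_def Let_def by blast
  qed
qed

end

context epi begin


lemma A_ge_contra:
  assumes m: "m > 0" and r: "r > 0" "r < 1"
    and SS: "\<forall>S. 0 < S \<and> S \<le> 1 \<longrightarrow> (S < r \<longrightarrow> F m S < 0) \<and> (S = r \<longrightarrow> F m S = 0) \<and> (r < S \<longrightarrow> F m S > 0)"
    and rB: "r < B m" and A1: "A m \<ge> 1"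
  shows False
proof -
  have F1: "F m 1 > 0" using SS r by auto
  show False
  proof (cases "B m \<ge> 1")
    case True
    have "Xa m 1 \<ge> 0" unfolding Xa_def using True A1 c2 m p0 q0 by simp
    moreover have "Xb m 1 \<ge> 0" unfolding Xb_def using True A1 c1 m p0 q0 by simp
    ultimately have "Q m 1 \<ge> 0" unfolding Q_def using c1 c2 m by simp
    moreover have "F m 1 = - Q m 1" unfolding F_def by simp
    ultimately show False using F1 by simp
  next
    case False
    have b: "B m > 0" using B_pos m by simp
    have FB: "F m (B m) > 0" using SS rB False b by auto
    have "c1 * (B m)^2 > 0" using c1 b by simp
    moreover have "0 < c1 * (B m)^2 * ((1 - B m) * c2 - (c2 + m) * (A m - B m) / q)" using FB unfolding F_at_B .
    ultimately have h: "(1 - B m) * c2 - (c2 + m) * (A m - B m) / q > 0" by (metis zero_less_mult_pos)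
    have "(1 - B m) * c2 \<le> (A m - B m) * c2" using A1 c2 by (intro mult_right_mono) auto
    also have "\<dots> \<le> (A m - B m) * (c2 + m)" using A1 False m by (intro mult_left_mono) auto
    also have "\<dots> \<le> (A m - B m) * (c2 + m) / q"
      using A1 False m c2 q0 q1 by (simp add: le_divide_eq mult_left_le)
    finally show False using h by (simp add: algebra_simps)
  qed
qed

lemma B_ge_contra:
  assumes m: "m > 0" and r: "r > 0" "r < 1"
    and SS: "\<forall>S. 0 < S \<and> S \<le> 1 \<longrightarrow> (S < r \<longrightarrow> F m S < 0) \<and> (S = r \<longrightarrow> F m S = 0) \<and> (r < S \<longrightarrow> F m S > 0)"
    and rA: "r < A m" and B1: "B m \<ge> 1"
  shows False
proof -
  have F1: "F m 1 > 0" using SS r by auto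
  show False
  proof (cases "A m \<ge> 1")
    case True
    have "Xa m 1 \<ge> 0" unfolding Xa_def using True B1 c2 m p0 q0 by simp
    moreover have "Xb m 1 \<ge> 0" unfolding Xb_def using True B1 c1 m p0 q0 by simp
    ultimately have "Q m 1 \<ge> 0" unfolding Q_def using c1 c2 m by simp
    moreover have "F m 1 = - Q m 1" unfolding F_def by simp
    ultimately show False using F1 by simp
  next
    case False
    have a: "A m > 0" using A_pos m by simp
    have FA: "F m (A m) > 0" using SS rA False a by auto
    have "c2 * (A m)^2 > 0" using c2 a by simp
    moreover have "0 < c2 * (A m)^2 * ((1 - A m) * c1 - (c1 + m) * (B m - A m) / p)" using FA unfolding F_at_A .
    ultimately have h: "(1 - A m) * c1 - (c1 + m) * (B m - A m) / p > 0" by (metis zero_less_mult_pos)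
    have "(1 - A m) * c1 \<le> (B m - A m) * c1" using B1 c1 by (intro mult_right_mono) auto
    also have "\<dots> \<le> (B m - A m) * (c1 + m)" using B1 False m by (intro mult_left_mono) auto
    also have "\<dots> \<le> (B m - A m) * (c1 + m) / p"
      using B1 False m c1 p0 p1 by (simp add: le_divide_eq mult_left_le)
    finally show False using h by (simp add: algebra_simps)
  qed
qed

lemma char:
  assumes m: "m > 0" and r: "r > 0"
    and SS: "\<forall>S. 0 < S \<and> S \<le> 1 \<longrightarrow> (S < r \<longrightarrow> F m S < 0) \<and> (S = r \<longrightarrow> F m S = 0) \<and> (r < S \<longrightarrow> F m S > 0)"
  shows "Omega m c1 c2 p q (repr_num b1 c1 m) (repr_num b2 c2 m) \<longleftrightarrow> (r < A m \<and> r < B m \<and> r < 1)"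
proof
  assume O: "Omega m c1 c2 p q (repr_num b1 c1 m) (repr_num b2 c2 m)"
  have H: "A m < 1" "B m < 1" "F m (A m) > 0" "F m (B m) > 0" using O Omega_iff[OF m] by auto
  have a: "A m > 0" and b: "B m > 0" using A_pos B_pos m by auto
  have rA: "r < A m"
  proof (rule ccontr)
    assume "\<not> r < A m"
    hence "A m < r \<or> A m = r" by auto
    thus False using SS[rule_format, of "A m"] a H by auto
  qed
  have rB: "r < B m"
  proof (rule ccontr)
    assume "\<not> r < B m"
    hence "B m < r \<or> B m = r" by auto
    thus False using SS[rule_format, of "B m"] b H by auto
  qed
  show "r < A m \<and> r < B m \<and> r < 1" using rA rB H by auto
next
  assume R: "r < A m \<and> r < B m \<and> r < 1"
  have a: "A m > 0" and b: "B m > 0" using A_pos B_pos m by auto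
  have A1: "A m < 1" using A_ge_contra[OF m r _ SS] R by force
  have B1: "B m < 1" using B_ge_contra[OF m r _ SS] R by force
  have "F m (A m) > 0" using SS[rule_format, of "A m"] a A1 R by auto
  moreover have "F m (B m) > 0" using SS[rule_format, of "B m"] b B1 R by auto
  ultimately show "Omega m c1 c2 p q (repr_num b1 c1 m) (repr_num b2 c2 m)"
    using Omega_iff[OF m] A1 B1 by auto
qed


lemma coex_S:
  assumes m: "m > 0" and r: "r > 0"
    and SS: "\<forall>S. 0 < S \<and> S \<le> 1 \<longrightarrow> (S < r \<longrightarrow> F m S < 0) \<and> (S = r \<longrightarrow> F m S = 0) \<and> (r < S \<longrightarrow> F m S > 0)"
    and P: "steady_state b1 b2 c1 c2 p q m x \<and> feasible x \<and> I1_of x > 0 \<and> I2_of x > 0"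
  shows "x = st m r \<and> S_of x = r \<and> r < A m \<and> r < B m \<and> r < 1"
proof -
  obtain S I1 I2 J1 J2 R1 R2 R3 where x: "x = (S, I1, I2, J1, J2, R1, R2, R3)" by (cases x) auto
  have i: "I1 > 0" "I2 > 0" using P x by (auto simp: I1_of_def I2_of_def)
  have red: "0 < S \<and> S < A m \<and> S < B m \<and> S < 1 \<and> F m S = 0 \<and> (S, I1, I2, J1, J2, R1, R2, R3) = st m S"
    using reduce[OF m _ _ i] P x by auto
  have "S = r"
  proof (rule ccontr)
    assume "S \<noteq> r"
    hence "S < r \<or> r < S" by auto
    thus False using SS[rule_format, of S] red by auto
  qed
  hence e1: "S_of x = r" using x by (simp add: S_of_def)
  have e2: "x = st m r" using red x \<open>S = r\<close> by simp
  show ?thesis using e1 e2 red \<open>S = r\<close> by simp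
qed

lemma main:
  shows "\<exists>\<mu>s. 0 < \<mu>s \<and> \<mu>s < min c1 c2 \<and>
    (\<exists>C. \<forall>\<mu>. 0 < \<mu> \<and> \<mu> < \<mu>s \<longrightarrow>
      (let R1 = repr_num b1 c1 \<mu>; R2 = repr_num b2 c2 \<mu>;
           s = s0 p q R1 R2;
           bb1 = (s + p * (1 - s)) / (c1 * p) * (1 - R2 * s);
           bb2 = (s + q * (1 - s)) / (c2 * q) * (1 - R1 * s)
       in (Omega \<mu> c1 c2 p q R1 R2 \<longrightarrow>
             (\<exists>!x. steady_state b1 b2 c1 c2 p q \<mu> x \<and> feasible x \<and>
                    I1_of x > 0 \<and> I2_of x > 0) \<and>
             (\<forall>x. steady_state b1 b2 c1 c2 p q \<mu> x \<and> feasible x \<and>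
                    I1_of x > 0 \<and> I2_of x > 0 \<longrightarrow>
                \<bar>S_of x - s\<bar> \<le> C * \<mu> \<and>
                \<bar>I1_of x - \<mu> * bb1\<bar> \<le> C * \<mu>\<^sup>2 \<and>
                \<bar>I2_of x - \<mu> * bb2\<bar> \<le> C * \<mu>\<^sup>2)) \<and>
          (\<not> Omega \<mu> c1 c2 p q R1 R2 \<longrightarrow>
             \<not> (\<exists>x. steady_state b1 b2 c1 c2 p q \<mu> x \<and> feasible x \<and>
                    I1_of x > 0 \<and> I2_of x > 0))))"
proof -
  obtain \<mu>1 where mu1: "\<mu>1 > 0" and SS: "\<And>m. 0 < m \<Longrightarrow> m < \<mu>1 \<Longrightarrow> (\<exists>r>0. \<forall>S. 0 < S \<and> S \<le> 1 \<longrightarrow>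
     (S < r \<longrightarrow> F m S < 0) \<and> (S = r \<longrightarrow> F m S = 0) \<and> (r < S \<longrightarrow> F m S > 0))"
    using sign_struct by blast
  have "\<exists>\<mu>2>0. \<exists>C. \<forall>m r. 0 < m \<and> m < \<mu>2 \<and> A m < 1 \<and> B m < 1 \<and> F m (A m) > 0 \<and> F m (B m) > 0 \<and>
     0 < r \<and> r < A m \<and> r < B m \<and> F m r = 0 \<longrightarrow>
     (let s = s0 p q (1 / A m) (1 / B m) in
       \<bar>r - s\<bar> \<le> C * m \<and>
       \<bar>m * (1 - r) * Xa m r / Q m r - m * ((s + p * (1 - s)) / (c1 * p) * (1 - 1 / B m * s))\<bar> \<le> C * m^2 \<and>
       \<bar>m * (1 - r) * Xb m r / Q m r - m * ((s + q * (1 - s)) / (c2 * q) * (1 - 1 / A m * s))\<bar> \<le> C * m^2)"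
  proof (cases "c1 / b1 < 1 \<and> c2 / b2 < 1")
    case True thus ?thesis using asym by blast
  next
    case False
    have "\<not> (A m < 1 \<and> B m < 1)" if "m > 0" for m
      using False AB_mono[of m] that by auto
    thus ?thesis by (intro exI[of _ 1]) auto
  qed
  then obtain \<mu>2 C where mu2: "\<mu>2 > 0" and AS: "\<And>m r. 0 < m \<and> m < \<mu>2 \<and> A m < 1 \<and> B m < 1 \<and> F m (A m) > 0 \<and> F m (B m) > 0 \<and>
     0 < r \<and> r < A m \<and> r < B m \<and> F m r = 0 \<Longrightarrow>
     (let s = s0 p q (1 / A m) (1 / B m) in
       \<bar>r - s\<bar> \<le> C * m \<and>
       \<bar>m * (1 - r) * Xa m r / Q m r - m * ((s + p * (1 - s)) / (c1 * p) * (1 - 1 / B m * s))\<bar> \<le> C * m^2 \<and>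
       \<bar>m * (1 - r) * Xb m r / Q m r - m * ((s + q * (1 - s)) / (c2 * q) * (1 - 1 / A m * s))\<bar> \<le> C * m^2)"
    by blast
  define \<mu>s where "\<mu>s = min \<mu>1 (min \<mu>2 (min c1 c2 / 2))"
  have mus: "0 < \<mu>s" "\<mu>s < min c1 c2" using mu1 mu2 c1 c2 by (auto simp: \<mu>s_def)
  show ?thesis
  proof (rule exI[of _ \<mu>s], rule conjI[OF mus(1)], rule conjI[OF mus(2)], rule exI[of _ C], intro allI impI)
    fix \<mu> :: real assume mu: "0 < \<mu> \<and> \<mu> < \<mu>s"
    have m: "\<mu> > 0" using mu by simp
    have m1: "\<mu> < \<mu>1" and m2: "\<mu> < \<mu>2" using mu by (auto simp: \<mu>s_def)
    obtain r where r: "r > 0" and SSr: "\<forall>S. 0 < S \<and> S \<le> 1 \<longrightarrow>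
     (S < r \<longrightarrow> F \<mu> S < 0) \<and> (S = r \<longrightarrow> F \<mu> S = 0) \<and> (r < S \<longrightarrow> F \<mu> S > 0)"
      using SS[OF m m1] by blast
    define P where "P x = (steady_state b1 b2 c1 c2 p q \<mu> x \<and> feasible x \<and> I1_of x > 0 \<and> I2_of x > 0)" for x
    have uniq: "x = st \<mu> r \<and> S_of x = r \<and> r < A \<mu> \<and> r < B \<mu> \<and> r < 1" if "P x" for x
      using coex_S[OF m r SSr] that unfolding P_def by blast
    have Om: "Omega \<mu> c1 c2 p q (repr_num b1 c1 \<mu>) (repr_num b2 c2 \<mu>) \<longleftrightarrow> (r < A \<mu> \<and> r < B \<mu> \<and> r < 1)"
      using char[OF m r SSr] .
    have R1e: "repr_num b1 c1 \<mu> = 1 / A \<mu>" and R2e: "repr_num b2 c2 \<mu> = 1 / B \<mu>" using rA rB m by auto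
    define s where "s = s0 p q (1 / A \<mu>) (1 / B \<mu>)"
    have part1: "(\<exists>!x. P x) \<and> (\<forall>x. P x \<longrightarrow>
                \<bar>S_of x - s\<bar> \<le> C * \<mu> \<and>
                \<bar>I1_of x - \<mu> * ((s + p * (1 - s)) / (c1 * p) * (1 - 1 / B \<mu> * s))\<bar> \<le> C * \<mu>\<^sup>2 \<and>
                \<bar>I2_of x - \<mu> * ((s + q * (1 - s)) / (c2 * q) * (1 - 1 / A \<mu> * s))\<bar> \<le> C * \<mu>\<^sup>2)"
      if O: "Omega \<mu> c1 c2 p q (repr_num b1 c1 \<mu>) (repr_num b2 c2 \<mu>)"
    proof -
      have rr: "r < A \<mu>" "r < B \<mu>" "r < 1" using O Om by auto
      have Fr: "F \<mu> r = 0" using SSr r rr by auto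
      have H: "A \<mu> < 1" "B \<mu> < 1" "F \<mu> (A \<mu>) > 0" "F \<mu> (B \<mu>) > 0" using O Omega_iff[OF m] by auto
      have Pst: "P (st \<mu> r)" using construct[OF m r rr Fr] unfolding P_def by blast
      have ex1: "\<exists>!x. P x" using Pst uniq by blast
      have bnd: "let s = s0 p q (1 / A \<mu>) (1 / B \<mu>) in
       \<bar>r - s\<bar> \<le> C * \<mu> \<and>
       \<bar>\<mu> * (1 - r) * Xa \<mu> r / Q \<mu> r - \<mu> * ((s + p * (1 - s)) / (c1 * p) * (1 - 1 / B \<mu> * s))\<bar> \<le> C * \<mu>^2 \<and>
       \<bar>\<mu> * (1 - r) * Xb \<mu> r / Q \<mu> r - \<mu> * ((s + q * (1 - s)) / (c2 * q) * (1 - 1 / A \<mu> * s))\<bar> \<le> C * \<mu>^2"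
        using AS[of \<mu> r] m m2 H r rr Fr by blast
      have I1st: "I1_of (st \<mu> r) = \<mu> * (1 - r) * Xa \<mu> r / Q \<mu> r"
        and I2st: "I2_of (st \<mu> r) = \<mu> * (1 - r) * Xb \<mu> r / Q \<mu> r"
        and Sst: "S_of (st \<mu> r) = r"
        by (simp_all add: st_def Let_def I1_of_def I2_of_def S_of_def)
      show ?thesis
      proof (rule conjI[OF ex1], intro allI impI)
        fix x assume "P x"
        hence xe: "x = st \<mu> r" using uniq by blast
        show "\<bar>S_of x - s\<bar> \<le> C * \<mu> \<and>
                \<bar>I1_of x - \<mu> * ((s + p * (1 - s)) / (c1 * p) * (1 - 1 / B \<mu> * s))\<bar> \<le> C * \<mu>\<^sup>2 \<and>
                \<bar>I2_of x - \<mu> * ((s + q * (1 - s)) / (c2 * q) * (1 - 1 / A \<mu> * s))\<bar> \<le> C * \<mu>\<^sup>2"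
          using bnd unfolding xe I1st I2st Sst s_def Let_def by blast
      qed
    qed
    have part2: "\<not> (\<exists>x. P x)" if O: "\<not> Omega \<mu> c1 c2 p q (repr_num b1 c1 \<mu>) (repr_num b2 c2 \<mu>)"
      using uniq Om O by blast
    show "let R1 = repr_num b1 c1 \<mu>; R2 = repr_num b2 c2 \<mu>;
           s = s0 p q R1 R2;
           bb1 = (s + p * (1 - s)) / (c1 * p) * (1 - R2 * s);
           bb2 = (s + q * (1 - s)) / (c2 * q) * (1 - R1 * s)
       in (Omega \<mu> c1 c2 p q R1 R2 \<longrightarrow>
             (\<exists>!x. steady_state b1 b2 c1 c2 p q \<mu> x \<and> feasible x \<and>
                    I1_of x > 0 \<and> I2_of x > 0) \<and>
             (\<forall>x. steady_state b1 b2 c1 c2 p q \<mu> x \<and> feasible x \<and>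
                    I1_of x > 0 \<and> I2_of x > 0 \<longrightarrow>
                \<bar>S_of x - s\<bar> \<le> C * \<mu> \<and>
                \<bar>I1_of x - \<mu> * bb1\<bar> \<le> C * \<mu>\<^sup>2 \<and>
                \<bar>I2_of x - \<mu> * bb2\<bar> \<le> C * \<mu>\<^sup>2)) \<and>
          (\<not> Omega \<mu> c1 c2 p q R1 R2 \<longrightarrow>
             \<not> (\<exists>x. steady_state b1 b2 c1 c2 p q \<mu> x \<and> feasible x \<and>
                    I1_of x > 0 \<and> I2_of x > 0))"
      unfolding Let_def
      using part1 part2 unfolding P_def s_def R1e[symmetric] R2e[symmetric] by blast
  qed
qed

end

theorem proposition4p1:
  fixes \<beta>1 \<beta>2 \<gamma>1 \<gamma>2 \<sigma>12 \<sigma>21 :: real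
  assumes "\<beta>1 > 0" "\<beta>2 > 0" "\<gamma>1 > 0" "\<gamma>2 > 0"
    and "0 < \<sigma>21" "\<sigma>21 \<le> \<sigma>12" "\<sigma>12 \<le> 1"
  shows "\<exists>\<mu>s. 0 < \<mu>s \<and> \<mu>s < min \<gamma>1 \<gamma>2 \<and>
    (\<exists>C. \<forall>\<mu>. 0 < \<mu> \<and> \<mu> < \<mu>s \<longrightarrow>
      (let R1 = repr_num \<beta>1 \<gamma>1 \<mu>; R2 = repr_num \<beta>2 \<gamma>2 \<mu>;
           s = s0 \<sigma>12 \<sigma>21 R1 R2;
           b1 = (s + \<sigma>12 * (1 - s)) / (\<gamma>1 * \<sigma>12) * (1 - R2 * s);
           b2 = (s + \<sigma>21 * (1 - s)) / (\<gamma>2 * \<sigma>21) * (1 - R1 * s)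
       in (Omega \<mu> \<gamma>1 \<gamma>2 \<sigma>12 \<sigma>21 R1 R2 \<longrightarrow>
             (\<exists>!x. steady_state \<beta>1 \<beta>2 \<gamma>1 \<gamma>2 \<sigma>12 \<sigma>21 \<mu> x \<and> feasible x \<and>
                    I1_of x > 0 \<and> I2_of x > 0) \<and>
             (\<forall>x. steady_state \<beta>1 \<beta>2 \<gamma>1 \<gamma>2 \<sigma>12 \<sigma>21 \<mu> x \<and> feasible x \<and>
                    I1_of x > 0 \<and> I2_of x > 0 \<longrightarrow>
                \<bar>S_of x - s\<bar> \<le> C * \<mu> \<and>
                \<bar>I1_of x - \<mu> * b1\<bar> \<le> C * \<mu>\<^sup>2 \<and>
                \<bar>I2_of x - \<mu> * b2\<bar> \<le> C * \<mu>\<^sup>2)) \<and>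
          (\<not> Omega \<mu> \<gamma>1 \<gamma>2 \<sigma>12 \<sigma>21 R1 R2 \<longrightarrow>
             \<not> (\<exists>x. steady_state \<beta>1 \<beta>2 \<gamma>1 \<gamma>2 \<sigma>12 \<sigma>21 \<mu> x \<and> feasible x \<and>
                    I1_of x > 0 \<and> I2_of x > 0))))"
  proof -
  interpret epi "\<beta>1" "\<beta>2" "\<gamma>1" "\<gamma>2" "\<sigma>12" "\<sigma>21"
    using assms by unfold_locales auto
  show ?thesis using main by simp
qed

end
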